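(* Let $d\ge1$, $s\in(0,1)$, $0<\lambda\le\Lambda$ and $M\ge0$. There exists $\beta>0$, depending only on $d,s,\lambda,\Lambda,M$, with the following property. Let $K:\mathbb{R}^d\to\mathbb{R}$ be a measurable kernel with $\lambda|y|^{-d-s}\le K(y)\le\Lambda|y|^{-d-s}$ and $K(y)=K(-y)$ for all $y\ne0$. Let $E\subset\mathbb{R}^d$ be a Borel set, let $B=B_r(x_0)\subset\mathbb{R}^d\setminus E$ be an open ball, and let $x\in\partial E\cap\partial B$. If $|E\cap B_{2r}(x_0)|\le\beta|B_{2r}(x_0)|$, then $H_{K,E}(x)\ge(M+1)r^{-s}$.
   Context: $B_\rho(x)$ is the open ball of radius $\rho$ centred at $x$, and $|F|$ denotes Lebesgue measure. Put $\tilde\chi_E=\chi_{\mathbb{R}^d\setminus E}-\chi_E$. Under the stated hypotheses (an exterior ball $B$ touching $\partial E$ at $x$), the limit \[ H_{K,E}(x)=\lim_{\varepsilon\to0^+}\int_{\mathbb{R}^d\setminus B_\varepsilon(x)}\tilde\chi_E(y)K(x-y)\,dy \] exists in $(-\infty,+\infty]$. *)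

theory Defs
  imports "HOL-Analysis.Analysis"
begin

definition chi_tilde :: "'a set \<Rightarrow> 'a \<Rightarrow> real" where
  "chi_tilde E y = (if y \<in> E then -1 else 1)"

definition H_trunc :: "('a::euclidean_space \<Rightarrow> real) \<Rightarrow> 'a set \<Rightarrow> 'a \<Rightarrow> real \<Rightarrow> real" where
  "H_trunc K E x \<epsilon> =
     set_lebesgue_integral lebesgue (- ball x \<epsilon>) (\<lambda>y. chi_tilde E y * K (x - y))"

definition H_KE :: "('a::euclidean_space \<Rightarrow> real) \<Rightarrow> 'a set \<Rightarrow> 'a \<Rightarrow> ereal" where
  "H_KE K E x = Lim (at_right 0) (\<lambda>\<epsilon>. ereal (H_trunc K E x \<epsilon>))"

end

theory Submission
  imports Defs
begin

definition omega :: "'a::euclidean_space itself \<Rightarrow> real" where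
  "omega _ = measure lebesgue (ball (0::'a) 1)"

lemma omega_nonneg: "omega TYPE('a::euclidean_space) \<ge> 0"
  unfolding omega_def by (rule measure_nonneg)

lemma emeasure_ball_omega:
  fixes c :: "'a::euclidean_space"
  assumes "t \<ge> 0"
  shows "emeasure lebesgue (ball c t) = ennreal (t ^ DIM('a) * omega TYPE('a))"
proof -
  have "emeasure lebesgue (ball (0::'a) 1) = ennreal (omega TYPE('a))"
    unfolding omega_def
    by (rule emeasure_eq_measure2) simp
  then show ?thesis using emeasure_lebesgue_ball_conv_unit_ball[OF assms, of c]
    using omega_nonneg[where 'a='a] assms by (simp add: ennreal_mult)
qed


lemma measure_ball_omega:
  fixes c :: "'a::euclidean_space"
  assumes "t \<ge> 0"
  shows "measure lebesgue (ball c t) = t ^ DIM('a) * omega TYPE('a)"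
proof -
  have nn: "0 \<le> t ^ DIM('a) * omega TYPE('a)"
    using omega_nonneg[where 'a='a] assms by simp
  have "measure lebesgue (ball c t) = enn2real (ennreal (t ^ DIM('a) * omega TYPE('a)))"
    unfolding measure_def emeasure_ball_omega[OF assms, of c] by (rule refl)
  also have "\<dots> = t ^ DIM('a) * omega TYPE('a)" using nn by (rule enn2real_ennreal)
  finally show ?thesis .
qed

lemma omega_pos: "omega TYPE('a::euclidean_space) > 0"
  unfolding omega_def using content_ball_pos[of 1 "0::'a"] by simp

lemma slab_sets:
  fixes n :: "'a::euclidean_space"
  shows "{u::'a. \<bar>u \<bullet> n\<bar> \<le> a \<and> norm u < t} \<in> sets lebesgue"
proof -
  have "{u::'a. \<bar>u \<bullet> n\<bar> \<le> a \<and> norm u < t} \<in> sets borel" by measurable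
  then show ?thesis by simp
qed

lemma slab_pack:
  fixes n :: "'a::euclidean_space"
  assumes n: "norm n = 1" and a: "0 < a" and t: "0 < t"
  shows "real N * measure lebesgue {u. \<bar>u \<bullet> n\<bar> \<le> a \<and> norm u < t}
     \<le> (t + 3*a*real N)^DIM('a) * omega TYPE('a)"
proof -
  define S where "S = {u::'a. \<bar>u \<bullet> n\<bar> \<le> a \<and> norm u < t}"
  define T where "T j = (\<lambda>u. 1 *\<^sub>R u + (3*a*real j) *\<^sub>R n) ` S" for j :: nat
  have S: "S \<in> sets lebesgue" unfolding S_def by (rule slab_sets)
  have Sb: "S \<subseteq> ball 0 t" unfolding S_def by auto
  have "emeasure lebesgue S \<le> emeasure lebesgue (ball (0::'a) t)" by (rule emeasure_mono[OF Sb]) simp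
  also have "\<dots> < \<infinity>" using emeasure_ball_omega[of t "0::'a"] t by simp
  finally have Sf: "emeasure lebesgue S < \<infinity>" .
  have nn: "n \<bullet> n = 1" using n by (simp add: norm_eq_1)
  have TS: "emeasure lebesgue (T j) = emeasure lebesgue S" for j
    unfolding T_def using emeasure_lebesgue_affine[of 1 "(3*a*real j) *\<^sub>R n" S] by simp
  have Tsets: "T j \<in> sets lebesgue" for j
    using TS Sf S unfolding T_def
    by (metis (no_types, lifting) image_cong lebesgue_sets_translation add.commute scaleR_one)
  have disj: "disjoint_family_on T {..<N}"
  proof (unfold disjoint_family_on_def, intro ballI impI)
    fix i j assume ij: "i \<in> {..<N}" "j \<in> {..<N}" "i \<noteq> j"
    show "T i \<inter> T j = {}"
    proof (rule ccontr)
      assume "T i \<inter> T j \<noteq> {}"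
      then obtain u1 u2 where u: "u1 \<in> S" "u2 \<in> S" "u1 + (3*a*real i) *\<^sub>R n = u2 + (3*a*real j) *\<^sub>R n"
        unfolding T_def by auto
      then have "(u1 + (3*a*real i) *\<^sub>R n) \<bullet> n = (u2 + (3*a*real j) *\<^sub>R n) \<bullet> n" by simp
      then have e: "u1 \<bullet> n + 3*a*real i = u2 \<bullet> n + 3*a*real j" using nn by (simp add: inner_add_left)
      have "\<bar>u1 \<bullet> n\<bar> \<le> a" "\<bar>u2 \<bullet> n\<bar> \<le> a" using u(1,2) unfolding S_def by auto
      with e have "3*a*\<bar>real i - real j\<bar> \<le> 2*a" by (auto simp: abs_if algebra_simps split: if_splits)
      then have "\<bar>real i - real j\<bar> \<le> 2/3" using a by (simp add: field_simps)
      moreover have "\<bar>real i - real j\<bar> \<ge> 1" using ij(3) by linarith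
      ultimately show False by simp
    qed
  qed
  have sub: "(\<Union>j\<in>{..<N}. T j) \<subseteq> ball 0 (t + 3*a*real N)"
  proof
    fix v assume "v \<in> (\<Union>j\<in>{..<N}. T j)"
    then obtain j u where j: "j < N" and u: "u \<in> S" and v: "v = u + (3*a*real j) *\<^sub>R n"
      unfolding T_def by auto
    have "norm v \<le> norm u + 3*a*real j" unfolding v using norm_triangle_ineq[of u "(3*a*real j) *\<^sub>R n"] n a
      by simp
    also have "\<dots> < t + 3*a*real N"
    proof -
      have "3*a*real j \<le> 3*a*real N" using j a by (intro mult_left_mono) auto
      then show ?thesis using u unfolding S_def by auto
    qed
    finally show "v \<in> ball 0 (t + 3*a*real N)" by simp
  qed
  have "(\<Sum>j\<in>{..<N}. emeasure lebesgue (T j)) = emeasure lebesgue (\<Union>j\<in>{..<N}. T j)"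
    by (rule sum_emeasure) (use Tsets disj in auto)
  also have "\<dots> \<le> emeasure lebesgue (ball (0::'a) (t + 3*a*real N))"
    using sub by (intro emeasure_mono) auto
  also have "\<dots> = ennreal ((t + 3*a*real N)^DIM('a) * omega TYPE('a))"
    using a t by (intro emeasure_ball_omega) auto
  finally have "of_nat N * emeasure lebesgue S \<le> ennreal ((t + 3*a*real N)^DIM('a) * omega TYPE('a))"
    using TS by simp
  moreover have "emeasure lebesgue S = ennreal (measure lebesgue S)"
    using Sf by (simp add: emeasure_eq_ennreal_measure)
  ultimately show ?thesis unfolding S_def[symmetric]
    using omega_nonneg[where 'a='a] a t
    by (simp add: ennreal_of_nat_eq_real_of_nat ennreal_mult''[symmetric] ennreal_le_iff)
qed

lemma slab_bound:
  fixes n :: "'a::euclidean_space"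
  assumes n: "norm n = 1" and t: "0 < t" and r: "0 < r"
  shows "measure lebesgue {u. \<bar>u \<bullet> n\<bar> \<le> t^2/(2*r) \<and> norm u < t}
     \<le> 3 * 2^DIM('a) * omega TYPE('a) * t^DIM('a) * (t/r)"
proof -
  define a where "a = t^2/(2*r)"
  define S where "S = {u::'a. \<bar>u \<bullet> n\<bar> \<le> a \<and> norm u < t}"
  have a: "0 < a" unfolding a_def using t r by simp
  have om: "0 < omega TYPE('a)" by (rule omega_pos)
  have Sb: "S \<subseteq> ball 0 t" unfolding S_def by auto
  have "measure lebesgue S \<le> measure lebesgue (ball (0::'a) t)"
    by (rule measure_mono_fmeasurable[OF Sb]) (unfold S_def, rule slab_sets, rule lmeasurable_ball)
  also have "\<dots> = t^DIM('a) * omega TYPE('a)" by (rule measure_ball_omega) (use t in simp)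
  finally have mS: "measure lebesgue S \<le> t^DIM('a) * omega TYPE('a)" .
  have p2: "(1::real) \<le> 2^DIM('a)" by simp
  show ?thesis
  proof (cases "3*a \<le> t")
    case True
    define N where "N = nat \<lfloor>t/(3*a)\<rfloor>"
    have q: "1 \<le> t/(3*a)" using True a by (simp add: field_simps)
    have fl: "1 \<le> \<lfloor>t/(3*a)\<rfloor>" using q by (simp add: le_floor_iff)
    have RN: "real N = real_of_int \<lfloor>t/(3*a)\<rfloor>" unfolding N_def using fl by simp
    have N1: "real N \<le> t/(3*a)" unfolding RN by (rule of_int_floor_le)
    have N2: "t/(3*a) < real N + 1" unfolding RN by (rule real_of_int_floor_add_one_gt)
    have N3: "1 \<le> real N" unfolding RN using fl by simp
    have "3*a*real N \<le> t" using N1 a by (simp add: field_simps)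
    then have "(t + 3*a*real N)^DIM('a) \<le> (2*t)^DIM('a)" using a N3 t by (intro power_mono) (auto intro!: add_nonneg_nonneg mult_nonneg_nonneg)
    then have "real N * measure lebesgue S \<le> (2*t)^DIM('a) * omega TYPE('a)"
      using slab_pack[OF n a t, of N] om unfolding S_def
      by (meson less_imp_le mult_right_mono order_trans)
    then have "measure lebesgue S \<le> (2*t)^DIM('a) * omega TYPE('a) / real N"
      using N3 by (simp add: field_simps)
    also have "\<dots> \<le> (2*t)^DIM('a) * omega TYPE('a) * (6*a/t)"
    proof -
      have "t < 3*a + 3*a*real N" using N2 a by (simp add: field_simps)
      moreover have "3*a \<le> 3*a*real N" using N3 a by simp
      ultimately have "t < 6*a*real N" by linarith
      then have "1/real N \<le> 6*a/t" using N3 t by (simp add: field_simps)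
      moreover have X: "0 \<le> (2*t)^DIM('a) * omega TYPE('a)" using om t by simp
      ultimately have "(2*t)^DIM('a) * omega TYPE('a) * (1/real N) \<le> (2*t)^DIM('a) * omega TYPE('a) * (6*a/t)"
        by (rule mult_left_mono)
      then show ?thesis by simp
    qed
    also have "\<dots> = 3 * 2^DIM('a) * omega TYPE('a) * t^DIM('a) * (t/r)"
      unfolding a_def using t r by (simp add: power_mult_distrib field_simps power2_eq_square)
    finally show ?thesis unfolding S_def a_def .
  next
    case False
    then have "2*r < 3*t" unfolding a_def using t r by (simp add: field_simps power2_eq_square)
    then have "1 \<le> 3 * (t/r)" using r by (simp add: field_simps)
    moreover have "3 * (t/r) \<le> 2^DIM('a) * (3 * (t/r))"
      using mult_right_mono[OF p2, of "3 * (t/r)"] t r by simp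
    ultimately have "1 \<le> 3 * 2^DIM('a) * (t/r)" by (simp add: algebra_simps)
    then have "t^DIM('a) * omega TYPE('a) \<le> t^DIM('a) * omega TYPE('a) * (3 * 2^DIM('a) * (t/r))"
      using mult_left_mono[OF \<open>1 \<le> 3 * 2^DIM('a) * (t/r)\<close>, of "t^DIM('a) * omega TYPE('a)"] om t
      by simp
    with mS show ?thesis unfolding S_def a_def by (simp add: algebra_simps)
  qed
qed

lemma pow2_powr: "(2^k::real) powr a = (2 powr a)^k"
  by (simp add: powr_realpow[symmetric] powr_powr powr_power mult.commute)

lemma powr_scale:
  fixes T s :: real
  assumes "0 < T"
  shows "T powr (-(real d + s)) * (2*T)^d = 2^d * T powr (-s)"
proof -
  have "T powr (-(real d + s)) * T^d = T powr (-(real d + s)) * T powr (real d)"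
    using assms by (simp add: powr_realpow)
  also have "\<dots> = T powr (-s)" by (simp add: powr_add[symmetric])
  finally show ?thesis by (simp add: power_mult_distrib)
qed

lemma sum_singl: "(\<Sum>j\<in>{k}. f j) = (f k :: ennreal)" by simp

lemma nn_cover_sum:
  fixes g :: "'a::euclidean_space \<Rightarrow> ennreal"
  assumes g: "g \<in> borel_measurable lebesgue"
  and A: "\<And>k. A k \<in> sets lebesgue"
  and cov: "\<And>u. u \<in> S \<Longrightarrow> g u = 0 \<or> (\<exists>k. u \<in> A k)"
  and bd: "\<And>k. (\<integral>\<^sup>+u. g u * indicator (A k) u \<partial>lebesgue) \<le> ennreal (b k)"
  and b0: "\<And>k. 0 \<le> b k" and sb: "summable b"
  shows "(\<integral>\<^sup>+u. g u * indicator S u \<partial>lebesgue) \<le> ennreal (\<Sum>k. b k)"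
proof -
  have pt: "g u * indicator S u \<le> (\<Sum>k. g u * indicator (A k) u)" for u
  proof (cases "u \<in> S \<and> g u \<noteq> 0")
    case True
    then obtain k where k: "u \<in> A k" using cov by blast
    have "g u * indicator S u = g u * indicator (A k) u" using True k by (simp add: indicator_def)
    also have "\<dots> = (\<Sum>j\<in>{k}. g u * indicator (A j) u)"
      using sum_singl[of "\<lambda>j. g u * indicator (A j) u" k] by simp
    also have "\<dots> \<le> (\<Sum>j. g u * indicator (A j) u)"
      by (rule sum_le_suminf) auto
    finally show ?thesis .
  qed (auto simp: indicator_def)
  have "(\<integral>\<^sup>+u. g u * indicator S u \<partial>lebesgue) \<le> (\<integral>\<^sup>+u. (\<Sum>k. g u * indicator (A k) u) \<partial>lebesgue)"
    by (rule nn_integral_mono) (rule pt)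
  also have "\<dots> = (\<Sum>k. (\<integral>\<^sup>+u. g u * indicator (A k) u \<partial>lebesgue))"
    by (rule nn_integral_suminf) (use g A in measurable)
  also have "\<dots> \<le> (\<Sum>k. ennreal (b k))"
    by (rule suminf_le) (use bd in auto)
  also have "\<dots> = ennreal (\<Sum>k. b k)" by (rule suminf_ennreal2) (use b0 sb in auto)
  finally show ?thesis .
qed

lemma nn_annulus:
  fixes \<phi> :: "'a::euclidean_space \<Rightarrow> real"
  assumes A: "A \<in> sets lebesgue" and le: "\<And>u. u \<in> A \<Longrightarrow> \<phi> u \<le> c"
  shows "(\<integral>\<^sup>+u. ennreal (\<phi> u) * indicator A u \<partial>lebesgue) \<le> ennreal c * emeasure lebesgue A"
proof -
  have "(\<integral>\<^sup>+u. ennreal (\<phi> u) * indicator A u \<partial>lebesgue) \<le> (\<integral>\<^sup>+u. ennreal c * indicator A u \<partial>lebesgue)"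
    by (rule nn_integral_mono) (auto simp: le ennreal_leI split: split_indicator)
  also have "\<dots> = ennreal c * emeasure lebesgue A" using A by (rule nn_integral_cmult_indicator)
  finally show ?thesis .
qed

lemma cover_up:
  fixes x \<rho> :: real
  assumes "0 < \<rho>" "\<rho> \<le> x"
  shows "\<exists>k::nat. 2^k * \<rho> \<le> x \<and> x < 2^(Suc k) * \<rho>"
proof -
  obtain n :: nat where n: "x / \<rho> < 2^n" using real_arch_pow[of 2 "x/\<rho>"] by auto
  then have "x < 2^n * \<rho>" using assms by (simp add: field_simps)
  then show ?thesis
  proof (induction n)
    case 0 then show ?case using assms by simp
  next
    case (Suc n)
    show ?case
    proof (cases "x < 2^n * \<rho>")
      case True then show ?thesis by (rule Suc.IH)
    next
      case False then show ?thesis using Suc.prems by (intro exI[of _ n]) auto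
    qed
  qed
qed

lemma cover_down:
  fixes x \<rho> :: real
  assumes "0 < x" "x < \<rho>"
  shows "\<exists>k::nat. \<rho> / 2^(Suc k) \<le> x \<and> x < \<rho> / 2^k"
proof -
  obtain n :: nat where n: "\<rho> / x < 2^n" using real_arch_pow[of 2 "\<rho>/x"] by auto
  then have "\<rho> / 2^n \<le> x" using assms by (simp add: field_simps)
  then show ?thesis
  proof (induction n)
    case 0 then show ?case using assms by simp
  next
    case (Suc n)
    show ?case
    proof (cases "\<rho> / 2^n \<le> x")
      case True then show ?thesis by (rule Suc.IH)
    next
      case False then show ?thesis using Suc.prems by (intro exI[of _ n]) auto
    qed
  qed
qed

abbreviation phi :: "real \<Rightarrow> 'a::euclidean_space \<Rightarrow> real" where
  "phi s u \<equiv> norm u powr (-(real DIM('a) + s))"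

lemma phi_meas: "(\<lambda>u::'a::euclidean_space. ennreal (phi s u)) \<in> borel_measurable lebesgue"
  by (rule measurable_completion) measurable

lemma phi_meas_real: "(\<lambda>u::'a::euclidean_space. phi s u) \<in> borel_measurable lebesgue"
  by (rule measurable_completion) measurable

lemma outer_nn:
  assumes s: "0 < s" and \<rho>: "0 < \<rho>"
  shows "(\<integral>\<^sup>+u. ennreal (phi s u) * indicator (-ball (0::'a::euclidean_space) \<rho>) u \<partial>lebesgue)
     \<le> ennreal (2^DIM('a) * omega TYPE('a) * \<rho> powr (-s) / (1 - 2 powr (-s)))"
proof -
  define q where "q = (2::real) powr (-s)"
  have q0: "0 < q" "q < 1" unfolding q_def using s by (auto simp: powr_less_one)
  define A where "A k = ball (0::'a) (2^(Suc k) * \<rho>) - ball 0 (2^k * \<rho>)" for k :: nat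
  define b where "b k = 2^DIM('a) * omega TYPE('a) * \<rho> powr (-s) * q^k" for k :: nat
  have om: "0 < omega TYPE('a)" by (rule omega_pos)
  have "(\<integral>\<^sup>+u. ennreal (phi s u) * indicator (-ball (0::'a) \<rho>) u \<partial>lebesgue) \<le> ennreal (\<Sum>k. b k)"
  proof (rule nn_cover_sum[OF phi_meas])
    show "A k \<in> sets lebesgue" for k unfolding A_def by simp
    show "ennreal (phi s u) = 0 \<or> (\<exists>k. u \<in> A k)" if "u \<in> - ball 0 \<rho>" for u
    proof -
      have "\<rho> \<le> norm u" using that by simp
      then obtain k where "2^k * \<rho> \<le> norm u \<and> norm u < 2^(Suc k) * \<rho>" using cover_up[OF \<rho>] by blast
      then show ?thesis unfolding A_def by auto
    qed
    show "0 \<le> b k" for k unfolding b_def using om q0 \<rho> by simp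
    show "summable b" unfolding b_def using q0 by (intro summable_mult summable_geometric) simp
    show "(\<integral>\<^sup>+u. ennreal (phi s u) * indicator (A k) u \<partial>lebesgue) \<le> ennreal (b k)" for k
    proof -
      define T where "T = 2^k * \<rho>"
      have T: "0 < T" unfolding T_def using \<rho> by simp
      have "(\<integral>\<^sup>+u. ennreal (phi s u) * indicator (A k) u \<partial>lebesgue)
          \<le> ennreal (T powr (-(real DIM('a) + s))) * emeasure lebesgue (A k)"
      proof (rule nn_annulus)
        show "A k \<in> sets lebesgue" unfolding A_def by simp
        show "phi s u \<le> T powr (-(real DIM('a) + s))" if "u \<in> A k" for u
          using that T s unfolding A_def T_def by (intro powr_mono2') auto
      qed
      also have "\<dots> \<le> ennreal (T powr (-(real DIM('a) + s))) * emeasure lebesgue (ball (0::'a) (2*T))"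
        by (intro mult_left_mono emeasure_mono) (auto simp: A_def T_def)
      also have "\<dots> = ennreal (T powr (-(real DIM('a) + s)) * ((2*T)^DIM('a) * omega TYPE('a)))"
      proof -
        have T2: "0 \<le> 2*T" using T by simp
        show ?thesis unfolding emeasure_ball_omega[OF T2]
          using T om by (simp add: ennreal_mult[symmetric])
      qed
      also have "\<dots> = ennreal (b k)"
      proof -
        have e1: "T powr (-(real DIM('a) + s)) * (2*T)^DIM('a) = 2^DIM('a) * T powr (-s)"
          by (rule powr_scale[OF T])
        have e2: "T powr (-s) = \<rho> powr (-s) * q^k"
          unfolding T_def q_def using \<rho> by (simp add: powr_mult pow2_powr)
        have "T powr (-(real DIM('a) + s)) * ((2*T)^DIM('a) * omega TYPE('a))
            = (T powr (-(real DIM('a) + s)) * (2*T)^DIM('a)) * omega TYPE('a)"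
          by (simp only: mult.assoc)
        also have "\<dots> = 2^DIM('a) * (\<rho> powr (-s) * q^k) * omega TYPE('a)"
          by (simp only: e1 e2)
        also have "\<dots> = b k" unfolding b_def by (simp only: mult_ac)
        finally show ?thesis by (simp only:)
      qed
      finally show ?thesis .
    qed
  qed
  also have "(\<Sum>k. b k) = 2^DIM('a) * omega TYPE('a) * \<rho> powr (-s) / (1 - 2 powr (-s))"
    unfolding b_def using q0 by (simp add: suminf_mult suminf_geometric q_def field_simps)
  finally show ?thesis .
qed

lemma slab_emeasure:
  fixes n :: "'a::euclidean_space"
  assumes n: "norm n = 1" and t: "0 < t" and r: "0 < r"
  shows "emeasure lebesgue {u. \<bar>u \<bullet> n\<bar> \<le> t^2/(2*r) \<and> norm u < t}
     \<le> ennreal (3 * 2^DIM('a) * omega TYPE('a) * t^DIM('a) * (t/r))"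
proof -
  let ?S = "{u::'a. \<bar>u \<bullet> n\<bar> \<le> t^2/(2*r) \<and> norm u < t}"
  have "?S \<in> fmeasurable lebesgue"
    by (rule fmeasurableI2[OF lmeasurable_ball[of 0 t]]) (auto intro: slab_sets)
  then have "emeasure lebesgue ?S = ennreal (measure lebesgue ?S)"
    by (simp add: emeasure_eq_measure2)
  also have "\<dots> \<le> ennreal (3 * 2^DIM('a) * omega TYPE('a) * t^DIM('a) * (t/r))"
    by (rule ennreal_leI) (rule slab_bound[OF n t r])
  finally show ?thesis .
qed

lemma lens_key:
  fixes c u :: "'a::euclidean_space"
  assumes r: "0 < r" and c: "norm c = r" and u: "u \<notin> ball c r" "u \<notin> ball (-c) r"
    and ut: "norm u < t"
  shows "\<bar>u \<bullet> (c /\<^sub>R r)\<bar> \<le> t^2/(2*r)"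
proof -
  have cc: "c \<bullet> c = r^2" using c by (metis power2_norm_eq_inner)
  have e1: "(norm (u - c))^2 = (norm u)^2 - 2*(u \<bullet> c) + r^2"
    using cc by (simp add: power2_norm_eq_inner inner_diff_left inner_diff_right inner_commute)
  have e2: "(norm (u + c))^2 = (norm u)^2 + 2*(u \<bullet> c) + r^2"
    using cc by (simp add: power2_norm_eq_inner inner_add_left inner_add_right inner_commute)
  have "r \<le> norm (u - c)" using u(1) by (simp add: dist_norm norm_minus_commute)
  then have "r^2 \<le> (norm (u - c))^2" using r by (intro power_mono) auto
  then have h1: "2*(u \<bullet> c) \<le> (norm u)^2" using e1 by simp
  have "r \<le> norm (u + c)" using u(2) by (simp add: dist_norm norm_minus_commute)
  then have "r^2 \<le> (norm (u + c))^2" using r by (intro power_mono) auto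
  then have h2: "-2*(u \<bullet> c) \<le> (norm u)^2" using e2 by simp
  have "(norm u)^2 \<le> t^2" using ut by (intro power_mono) auto
  with h1 h2 have "\<bar>u \<bullet> c\<bar> \<le> t^2/2" by auto
  then show ?thesis using r by (simp add: field_simps)
qed

definition lens_const :: "'a::euclidean_space itself \<Rightarrow> real \<Rightarrow> real" where
  "lens_const _ s = 6 * 2^DIM('a) * 2^DIM('a) * omega TYPE('a) / (1 - 1 / 2 powr (1 - s))"

lemma lens_nn:
  fixes c :: "'a::euclidean_space"
  assumes s: "0 < s" "s < 1" and r: "0 < r" and c: "norm c = r" and \<rho>: "0 < \<rho>"
  shows "(\<integral>\<^sup>+u. ennreal (phi s u) * indicator (-(ball c r \<union> ball (-c) r) \<inter> ball 0 \<rho>) u \<partial>lebesgue)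
     \<le> ennreal (lens_const TYPE('a) s * (\<rho>/2) powr (1 - s) / r)"
proof -
  define n where "n = c /\<^sub>R r"
  have n: "norm n = 1" unfolding n_def using c r by simp
  define q where "q = 1 / (2::real) powr (1 - s)"
  have q0: "0 < q" "q < 1" unfolding q_def using s by auto
  define D where "D = -(ball c r \<union> ball (-c) r)"
  define A where "A k = D \<inter> (ball (0::'a) (\<rho>/2^k) - ball 0 (\<rho>/2^(Suc k)))" for k :: nat
  define b where "b k = 6 * 2^DIM('a) * 2^DIM('a) * omega TYPE('a) / r * (\<rho>/2) powr (1 - s) * q^k" for k :: nat
  have om: "0 < omega TYPE('a)" by (rule omega_pos)
  have Dsets: "D \<in> sets lebesgue" unfolding D_def by simp
  have "(\<integral>\<^sup>+u. ennreal (phi s u) * indicator (D \<inter> ball 0 \<rho>) u \<partial>lebesgue) \<le> ennreal (\<Sum>k. b k)"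
  proof (rule nn_cover_sum[OF phi_meas])
    show "A k \<in> sets lebesgue" for k unfolding A_def by (intro sets.Int sets.Diff Dsets) auto
    show "ennreal (phi s u) = 0 \<or> (\<exists>k. u \<in> A k)" if "u \<in> D \<inter> ball 0 \<rho>" for u
    proof (cases "u = 0")
      case True then show ?thesis by simp
    next
      case False
      then have "0 < norm u" "norm u < \<rho>" using that by auto
      then obtain k where "\<rho>/2^(Suc k) \<le> norm u \<and> norm u < \<rho>/2^k" using cover_down by blast
      then show ?thesis using that unfolding A_def by auto
    qed
    show "0 \<le> b k" for k unfolding b_def using om q0 \<rho> r by simp
    show "summable b" unfolding b_def using q0 by (intro summable_mult summable_geometric) simp
    show "(\<integral>\<^sup>+u. ennreal (phi s u) * indicator (A k) u \<partial>lebesgue) \<le> ennreal (b k)" for k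
    proof -
      define T where "T = \<rho> / 2^(Suc k)"
      have T: "0 < T" unfolding T_def using \<rho> by simp
      have tT: "\<rho> / 2^k = 2*T" unfolding T_def by simp
      have "(\<integral>\<^sup>+u. ennreal (phi s u) * indicator (A k) u \<partial>lebesgue)
          \<le> ennreal (T powr (-(real DIM('a) + s))) * emeasure lebesgue (A k)"
      proof (rule nn_annulus)
        show "A k \<in> sets lebesgue" unfolding A_def by (intro sets.Int sets.Diff Dsets) auto
        show "phi s u \<le> T powr (-(real DIM('a) + s))" if "u \<in> A k" for u
          using that T s unfolding A_def T_def by (intro powr_mono2') auto
      qed
      also have "\<dots> \<le> ennreal (T powr (-(real DIM('a) + s))) *
          emeasure lebesgue {u. \<bar>u \<bullet> n\<bar> \<le> (2*T)^2/(2*r) \<and> norm u < 2*T}"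
      proof (intro mult_left_mono emeasure_mono)
        show "A k \<subseteq> {u. \<bar>u \<bullet> n\<bar> \<le> (2*T)^2/(2*r) \<and> norm u < 2*T}"
        proof
          fix u assume "u \<in> A k"
          then have u: "u \<notin> ball c r" "u \<notin> ball (-c) r" "norm u < 2*T"
            unfolding A_def D_def tT by auto
          show "u \<in> {u. \<bar>u \<bullet> n\<bar> \<le> (2*T)^2/(2*r) \<and> norm u < 2*T}"
            using lens_key[OF r c u] u(3) unfolding n_def by simp
        qed
      qed (auto intro: slab_sets)
      also have "\<dots> \<le> ennreal (T powr (-(real DIM('a) + s))) *
          ennreal (3 * 2^DIM('a) * omega TYPE('a) * (2*T)^DIM('a) * ((2*T)/r))"
        using T by (intro mult_left_mono slab_emeasure[OF n _ r]) auto
      also have "\<dots> = ennreal (b k)"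
      proof -
        have e1: "T powr (-(real DIM('a) + s)) * (2*T)^DIM('a) = 2^DIM('a) * T powr (-s)"
          by (rule powr_scale[OF T])
        have e3: "T powr (-s) * T = T powr (1 - s)"
        proof -
          have "T powr (1 - s) = T powr 1 * T powr (-s)"
            unfolding powr_add[symmetric] by simp
          then show ?thesis using T by simp
        qed
        have e2: "T powr (1 - s) = (\<rho>/2) powr (1 - s) * q^k"
        proof -
          have "T = (\<rho>/2) / 2^k" unfolding T_def by (simp add: field_simps)
          then have "T powr (1 - s) = (\<rho>/2) powr (1 - s) / (2^k) powr (1 - s)"
            using \<rho> by (simp add: powr_divide powr_mult del: power_Suc)
          also have "\<dots> = (\<rho>/2) powr (1 - s) * q^k"
            unfolding q_def pow2_powr by (simp add: power_one_over)
          finally show ?thesis .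
        qed
        have "T powr (-(real DIM('a) + s)) * (3 * 2^DIM('a) * omega TYPE('a) * (2*T)^DIM('a) * ((2*T)/r))
            = (T powr (-(real DIM('a) + s)) * (2*T)^DIM('a)) * (6 * 2^DIM('a) * omega TYPE('a) / r) * T"
          by (simp add: field_simps)
        also have "\<dots> = 6 * 2^DIM('a) * 2^DIM('a) * omega TYPE('a) / r * (T powr (-s) * T)"
          unfolding e1 by (simp add: field_simps)
        also have "\<dots> = b k" unfolding e3 e2 b_def by (simp add: field_simps)
        finally show ?thesis
          using T om r by (simp add: ennreal_mult[symmetric])
      qed
      finally show ?thesis .
    qed
  qed
  also have "(\<Sum>k. b k) = lens_const TYPE('a) s * (\<rho>/2) powr (1 - s) / r"
  proof -
    define C where "C = 6 * 2^DIM('a) * 2^DIM('a) * omega TYPE('a) / r * (\<rho>/2) powr (1 - s)"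
    have bC: "b = (\<lambda>k. C * q^k)" by (simp add: b_def C_def fun_eq_iff)
    have S0: "(\<Sum>k. C * q^k) = C * (\<Sum>k. q^k)"
      by (rule suminf_mult) (rule summable_geometric, use q0 in simp)
    have S2: "(\<Sum>k. q^k) = 1 / (1 - q)" by (rule suminf_geometric) (use q0 in simp)
    have L: "lens_const TYPE('a) s = 6 * 2^DIM('a) * 2^DIM('a) * omega TYPE('a) / (1 - q)"
      by (simp add: lens_const_def q_def)
    have "1 - q \<noteq> 0" "r \<noteq> 0" using q0 r by auto
    then show ?thesis unfolding bC S0 S2 L by (simp add: C_def field_simps)
  qed
  finally show ?thesis unfolding D_def .
qed

lemma lebesgue_reflect_shift:
  fixes x :: "'a::euclidean_space"
  shows "lebesgue = distr lebesgue lebesgue (\<lambda>u. x - u)"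
    and "(\<lambda>u. x - u) \<in> lebesgue \<rightarrow>\<^sub>M lebesgue"
proof -
  have T: "(\<lambda>u::'a. x + (\<Sum>j\<in>Basis. ((-1) * (u \<bullet> j)) *\<^sub>R j)) = (\<lambda>u. x - u)"
  proof
    fix u :: 'a
    have "(\<Sum>j\<in>Basis. ((-1) * (u \<bullet> j)) *\<^sub>R j) = - (\<Sum>j\<in>Basis. (u \<bullet> j) *\<^sub>R j)"
      by (simp add: sum_negf)
    also have "\<dots> = - u" by (simp add: euclidean_representation)
    finally show "x + (\<Sum>j\<in>Basis. ((-1) * (u \<bullet> j)) *\<^sub>R j) = x - u" by simp
  qed
  have "lebesgue = density (distr lebesgue lebesgue (\<lambda>u::'a. x + (\<Sum>j\<in>Basis. ((-1) * (u \<bullet> j)) *\<^sub>R j)))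
      (\<lambda>_. (\<Prod>j\<in>(Basis::'a set). \<bar>-1::real\<bar>))"
    by (rule lebesgue_affine_euclidean) simp
  then show "lebesgue = distr lebesgue lebesgue (\<lambda>u. x - u)"
    unfolding T by (simp add: density_1)
  show "(\<lambda>u. x - u) \<in> lebesgue \<rightarrow>\<^sub>M lebesgue"
    using lebesgue_affine_measurable[of "\<lambda>_::'a. -1" x] unfolding T by simp
qed

lemma integral_reflect_shift:
  fixes f :: "'a::euclidean_space \<Rightarrow> real" and x :: 'a
  assumes f: "f \<in> borel_measurable lebesgue"
  shows "(\<integral>y. f y \<partial>lebesgue) = (\<integral>u. f (x - u) \<partial>lebesgue)"
proof -
  have "(\<integral>y. f y \<partial>lebesgue) = (\<integral>y. f y \<partial>distr lebesgue lebesgue (\<lambda>u. x - u))"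
    using lebesgue_reflect_shift(1)[of x] by simp
  also have "\<dots> = (\<integral>u. f (x - u) \<partial>lebesgue)"
    by (rule integral_distr[OF lebesgue_reflect_shift(2) f])
  finally show ?thesis .
qed

lemma measurable_reflect_shift:
  fixes f :: "'a::euclidean_space \<Rightarrow> real" and x :: 'a
  assumes f: "f \<in> borel_measurable lebesgue"
  shows "(\<lambda>u. f (x - u)) \<in> borel_measurable lebesgue"
  using measurable_compose[OF lebesgue_reflect_shift(2) f] by simp

lemma sets_reflect_shift:
  fixes x :: "'a::euclidean_space"
  assumes "E \<in> sets lebesgue"
  shows "{u. x - u \<in> E} \<in> sets lebesgue"
  using measurable_sets[OF lebesgue_reflect_shift(2)[of x] assms] by (simp add: vimage_def)

lemma emeasure_reflect_shift:
  fixes x :: "'a::euclidean_space"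
  assumes "E \<in> sets lebesgue"
  shows "emeasure lebesgue {u. x - u \<in> E} = emeasure lebesgue E"
proof -
  have "emeasure lebesgue E = emeasure (distr lebesgue lebesgue (\<lambda>u. x - u)) E"
    using lebesgue_reflect_shift(1)[of x] by simp
  also have "\<dots> = emeasure lebesgue ((\<lambda>u. x - u) -` E \<inter> space lebesgue)"
    by (rule emeasure_distr[OF lebesgue_reflect_shift(2) assms])
  finally show ?thesis by (simp add: vimage_def)
qed

lemma mono_lim:
  fixes f :: "real \<Rightarrow> real"
  assumes r: "0 < r" and mono: "\<And>a b. 0 < a \<Longrightarrow> a \<le> b \<Longrightarrow> b < r \<Longrightarrow> f b \<le> f a"
  shows "((\<lambda>e. ereal (f e)) \<longlongrightarrow> (SUP e\<in>{0<..<r}. ereal (f e))) (at_right 0)"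
proof (rule increasing_tendsto)
  show "\<forall>\<^sub>F e in at_right 0. ereal (f e) \<le> (SUP e\<in>{0<..<r}. ereal (f e))"
    unfolding eventually_at_right_field using r
    by (intro exI[of _ r]) (auto intro: SUP_upper)
  fix x assume "x < (SUP e\<in>{0<..<r}. ereal (f e))"
  then obtain e where e: "e \<in> {0<..<r}" "x < ereal (f e)" by (auto simp: less_SUP_iff)
  show "\<forall>\<^sub>F e in at_right 0. x < ereal (f e)"
    unfolding eventually_at_right_field using e
  proof (intro exI[of _ e] conjI allI impI)
    show "0 < e" using e by simp
    fix y :: real assume y: "0 < y" "y < e"
    have "f e \<le> f y" using mono[of y e] y e by auto
    then show "x < ereal (f y)" using e(2) by (meson ereal_less_eq(3) less_le_trans)
  qed
qed

lemma mono_lim_bdd: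
  fixes f :: "real \<Rightarrow> real"
  assumes r: "0 < r" and mono: "\<And>a b. 0 < a \<Longrightarrow> a \<le> b \<Longrightarrow> b < r \<Longrightarrow> f b \<le> f a"
    and bdd: "\<And>e. 0 < e \<Longrightarrow> e < r \<Longrightarrow> f e \<le> B"
  shows "\<exists>l. (f \<longlongrightarrow> l) (at_right 0)"
proof -
  let ?L = "SUP e\<in>{0<..<r}. ereal (f e)"
  have lim: "((\<lambda>e. ereal (f e)) \<longlongrightarrow> ?L) (at_right 0)" by (rule mono_lim[OF r mono])
  have "?L \<le> ereal B" using bdd by (auto intro!: SUP_least)
  moreover have "ereal (f (r/2)) \<le> ?L" using r by (intro SUP_upper) auto
  ultimately obtain l where "?L = ereal l" by (cases ?L) auto
  with lim have "((\<lambda>e. ereal (f e)) \<longlongrightarrow> ereal l) (at_right 0)" by simp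
  then have "(f \<longlongrightarrow> l) (at_right 0)" using ereal_tendsto_simps2(1)[of f l] by (simp add: o_def)
  then show ?thesis by blast
qed

locale ksetup =
  fixes K :: "'a::euclidean_space \<Rightarrow> real" and G :: "'a set" and c :: 'a and r s lam Lam :: real
  assumes Kmeas: "K \<in> borel_measurable lebesgue"
    and Klow: "\<And>y. y \<noteq> 0 \<Longrightarrow> lam * phi s y \<le> K y"
    and Kup: "\<And>y. y \<noteq> 0 \<Longrightarrow> K y \<le> Lam * phi s y"
    and Ksym: "\<And>y. y \<noteq> 0 \<Longrightarrow> K y = K (-y)"
    and Gs: "G \<in> sets lebesgue" and r: "0 < r" and c: "norm c = r"
    and Gc: "G \<inter> ball c r = {}"
    and s: "0 < s" "s < 1" and lam: "0 < lam" "lam \<le> Lam"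
begin

definition F where "F u = chi_tilde G u * K u"
definition h where "h e = (\<integral>u. indicator (-ball 0 e) u * F u \<partial>lebesgue)"

lemma phi_nonneg: "0 \<le> phi s u" by simp

lemma K_nonneg: "y \<noteq> 0 \<Longrightarrow> 0 \<le> K y"
  using Klow[of y] lam phi_nonneg[of y] by (meson mult_nonneg_nonneg order_trans less_imp_le)

lemma K_abs: "y \<noteq> 0 \<Longrightarrow> \<bar>K y\<bar> \<le> Lam * phi s y"
  using K_nonneg Kup by auto

lemma chi_abs: "\<bar>chi_tilde G u\<bar> = 1" by (simp add: chi_tilde_def)

lemma F_abs: "y \<noteq> 0 \<Longrightarrow> \<bar>F y\<bar> \<le> Lam * phi s y"
  using K_abs by (simp add: F_def abs_mult chi_abs)

lemma chi_meas: "chi_tilde G \<in> borel_measurable lebesgue"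
proof -
  have "(\<lambda>u. if u \<in> G then -1 else (1::real)) \<in> borel_measurable lebesgue"
    using Gs by measurable
  then show ?thesis by (simp add: chi_tilde_def[abs_def])
qed

lemma chi_meas_neg: "(\<lambda>u. chi_tilde G (-u)) \<in> borel_measurable lebesgue"
  using measurable_reflect_shift[OF chi_meas, of 0] by simp

lemma F_meas: "F \<in> borel_measurable lebesgue"
  unfolding F_def[abs_def] using chi_meas Kmeas by measurable

lemma phi_fin:
  fixes S :: "'a set"
  assumes e: "0 < e" and S: "S \<subseteq> -ball 0 e"
  shows "(\<integral>\<^sup>+u. ennreal (phi s u) * indicator S u \<partial>lebesgue) < \<infinity>"
proof -
  have "(\<integral>\<^sup>+u. ennreal (phi s u) * indicator S u \<partial>lebesgue)
     \<le> (\<integral>\<^sup>+u. ennreal (phi s u) * indicator (-ball (0::'a) e) u \<partial>lebesgue)"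
    using S by (intro nn_integral_mono) (auto simp: indicator_def)
  also have "\<dots> \<le> ennreal (2^DIM('a) * omega TYPE('a) * e powr (-s) / (1 - 2 powr (-s)))"
    by (rule outer_nn[OF s(1) e])
  also have "\<dots> < \<infinity>" by simp
  finally show ?thesis .
qed

lemma int_gen:
  fixes S :: "'a set"
  assumes e: "0 < e" and S: "S \<subseteq> -ball 0 e" "S \<in> sets lebesgue"
    and g: "g \<in> borel_measurable lebesgue" and C: "0 \<le> C"
    and gb: "\<And>u. u \<in> S \<Longrightarrow> \<bar>g u\<bar> \<le> C * phi s u"
  shows "integrable lebesgue (\<lambda>u. indicator S u * g u)"
proof (rule integrableI_bounded)
  show "(\<lambda>u. indicator S u * g u) \<in> borel_measurable lebesgue" using S g by measurable
  have "(\<integral>\<^sup>+u. ennreal (norm (indicator S u * g u)) \<partial>lebesgue)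
      \<le> (\<integral>\<^sup>+u. ennreal C * (ennreal (phi s u) * indicator S u) \<partial>lebesgue)"
  proof (intro nn_integral_mono)
    fix u
    show "ennreal (norm (indicator S u * g u)) \<le> ennreal C * (ennreal (phi s u) * indicator S u)"
    proof (cases "u \<in> S")
      case True
      then have "norm (indicator S u * g u) \<le> C * phi s u" using gb[OF True] by simp
      then show ?thesis using True C by (simp add: ennreal_mult[symmetric] ennreal_leI)
    qed simp
  qed
  also have "\<dots> = ennreal C * (\<integral>\<^sup>+u. ennreal (phi s u) * indicator S u \<partial>lebesgue)"
    by (rule nn_integral_cmult)
      (rule borel_measurable_times_ennreal[OF phi_meas borel_measurable_indicator[OF S(2)]])
  also have "\<dots> < \<infinity>" using phi_fin[OF e S(1)] by (simp add: ennreal_mult_less_top)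
  finally show "(\<integral>\<^sup>+u. ennreal (norm (indicator S u * g u)) \<partial>lebesgue) < \<infinity>" .
qed

lemma phi_int_le:
  fixes S :: "'a set"
  assumes e: "0 < e" and S: "S \<subseteq> -ball 0 e" "S \<in> sets lebesgue" and B: "0 \<le> B"
    and nb: "(\<integral>\<^sup>+u. ennreal (phi s u) * indicator S u \<partial>lebesgue) \<le> ennreal B"
  shows "(\<integral>u. indicator S u * phi s u \<partial>lebesgue) \<le> B"
proof -
  have int: "integrable lebesgue (\<lambda>u. indicator S u * phi s u)"
    by (rule int_gen[OF e S phi_meas_real, of 1]) auto
  have "ennreal (\<integral>u. indicator S u * phi s u \<partial>lebesgue)
      = (\<integral>\<^sup>+u. ennreal (indicator S u * phi s u) \<partial>lebesgue)"
    by (rule nn_integral_eq_integral[symmetric]) (use int in auto)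
  also have "\<dots> = (\<integral>\<^sup>+u. ennreal (phi s u) * indicator S u \<partial>lebesgue)"
    by (intro nn_integral_cong) (auto simp: indicator_def)
  also note nb
  finally show ?thesis using B by (simp add: ennreal_le_iff)
qed

end

context ksetup begin

definition W where "W u = (chi_tilde G u + chi_tilde G (-u)) / 2"
definition D where "D = -(ball c r \<union> ball (-c) r)"
definition lensB where "lensB \<rho> = lens_const TYPE('a) s * (\<rho>/2) powr (1 - s) / r"

lemma ind_meas:
  fixes S :: "'a set" and g :: "'a \<Rightarrow> real"
  assumes "S \<in> sets lebesgue" "g \<in> borel_measurable lebesgue"
  shows "(\<lambda>u. indicator S u * g u) \<in> borel_measurable lebesgue"
  by (rule borel_measurable_times[OF borel_measurable_indicator[OF assms(1)] assms(2)])

lemma W_meas: "W \<in> borel_measurable lebesgue"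
proof -
  have "(\<lambda>u. (chi_tilde G u + chi_tilde G (-u)) / 2) \<in> borel_measurable lebesgue"
    by (intro borel_measurable_divide borel_measurable_add chi_meas chi_meas_neg borel_measurable_const)
  then show ?thesis unfolding W_def[abs_def] .
qed

lemma ann_sub: "0 < e \<Longrightarrow> ball 0 \<rho> - ball 0 e \<subseteq> -ball (0::'a) e" by auto

lemma ann_nz: "0 < e \<Longrightarrow> u \<in> -ball (0::'a) e \<Longrightarrow> u \<noteq> 0" by auto

lemma nz: "0 < e \<Longrightarrow> \<not> norm (u::'a) < e \<Longrightarrow> u \<noteq> 0" by auto

lemma int_F:
  fixes S :: "'a set"
  assumes e: "0 < e" and S: "S \<subseteq> -ball 0 e" "S \<in> sets lebesgue"
  shows "integrable lebesgue (\<lambda>u. indicator S u * F u)"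
proof (rule int_gen[OF e S F_meas, of Lam])
  show "0 \<le> Lam" using lam by simp
  show "\<bar>F u\<bar> \<le> Lam * phi s u" if "u \<in> S" for u
    using that S(1) e by (intro F_abs) auto
qed

lemma int_K:
  fixes S :: "'a set"
  assumes e: "0 < e" and S: "S \<subseteq> -ball 0 e" "S \<in> sets lebesgue"
  shows "integrable lebesgue (\<lambda>u. indicator S u * K u)"
proof (rule int_gen[OF e S Kmeas, of Lam])
  show "0 \<le> Lam" using lam by simp
  show "\<bar>K u\<bar> \<le> Lam * phi s u" if "u \<in> S" for u
    using that S(1) e by (intro K_abs) auto
qed

lemma h_split:
  assumes e: "0 < e" and \<rho>: "e < \<rho>"
  shows "h e = (\<integral>u. indicator (ball 0 \<rho> - ball 0 e) u * F u \<partial>lebesgue)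
             + (\<integral>u. indicator (-ball 0 \<rho>) u * F u \<partial>lebesgue)"
proof -
  have i1: "integrable lebesgue (\<lambda>u. indicator (ball 0 \<rho> - ball 0 e) u * F u)"
    by (rule int_F[OF e]) auto
  have i2: "integrable lebesgue (\<lambda>u. indicator (-ball 0 \<rho>) u * F u)"
    by (rule int_F[OF e]) (use \<rho> in auto)
  have "h e = (\<integral>u. indicator (ball 0 \<rho> - ball 0 e) u * F u + indicator (-ball 0 \<rho>) u * F u \<partial>lebesgue)"
    unfolding h_def by (intro Bochner_Integration.integral_cong) (use \<rho> in \<open>auto simp: indicator_def\<close>)
  also have "\<dots> = (\<integral>u. indicator (ball 0 \<rho> - ball 0 e) u * F u \<partial>lebesgue)
             + (\<integral>u. indicator (-ball 0 \<rho>) u * F u \<partial>lebesgue)"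
    by (rule Bochner_Integration.integral_add[OF i1 i2])
  finally show ?thesis .
qed

lemma ann_reflect:
  assumes e: "0 < e"
  shows "(\<integral>u. indicator (ball 0 \<rho> - ball 0 e) u * F u \<partial>lebesgue)
       = (\<integral>u. indicator (ball 0 \<rho> - ball 0 e) u * (K u * W u) \<partial>lebesgue)"
proof -
  let ?A = "ball (0::'a) \<rho> - ball 0 e"
  let ?I1 = "\<integral>u. indicator ?A u * F u \<partial>lebesgue"
  let ?I2 = "\<integral>u. indicator ?A u * (chi_tilde G (-u) * K u) \<partial>lebesgue"
  have i1: "integrable lebesgue (\<lambda>u. indicator ?A u * F u)"
    by (rule int_F[OF e]) auto
  have i2: "integrable lebesgue (\<lambda>u. indicator ?A u * (chi_tilde G (-u) * K u))"
  proof (rule int_gen[OF e ann_sub[OF e]])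
    show "?A \<in> sets lebesgue" by simp
    show "(\<lambda>u. chi_tilde G (-u) * K u) \<in> borel_measurable lebesgue"
      by (rule borel_measurable_times[OF chi_meas_neg Kmeas])
    show "0 \<le> Lam" using lam by simp
    show "\<bar>chi_tilde G (-u) * K u\<bar> \<le> Lam * phi s u" if "u \<in> ?A" for u
    proof -
      have "u \<noteq> 0" using that e by auto
      then show ?thesis using K_abs[of u] by (simp add: abs_mult chi_abs)
    qed
  qed
  have m: "(\<lambda>u. indicator ?A u * F u) \<in> borel_measurable lebesgue"
    by (rule ind_meas[OF _ F_meas]) simp
  have "?I1 = (\<integral>u. indicator ?A (0 - u) * F (0 - u) \<partial>lebesgue)"
    by (rule integral_reflect_shift[OF m])
  also have "\<dots> = ?I2"
  proof (intro Bochner_Integration.integral_cong refl)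
    fix u
    show "indicator ?A (0 - u) * F (0 - u) = indicator ?A u * (chi_tilde G (-u) * K u)"
    proof (cases "u \<in> ?A")
      case True
      then have "u \<noteq> 0" using e by auto
      then have "K (-u) = K u" using Ksym[of u] by simp
      then show ?thesis using True by (simp add: F_def indicator_def)
    next
      case False
      then have "0 - u \<notin> ?A" by auto
      then show ?thesis using False by simp
    qed
  qed
  finally have eq: "?I1 = ?I2" .
  have "(\<integral>u. indicator ?A u * (K u * W u) \<partial>lebesgue)
      = (\<integral>u. (indicator ?A u * F u + indicator ?A u * (chi_tilde G (-u) * K u)) / 2 \<partial>lebesgue)"
    by (intro Bochner_Integration.integral_cong refl) (simp add: W_def F_def algebra_simps add_divide_distrib)
  also have "\<dots> = (?I1 + ?I2) / 2"
    using Bochner_Integration.integral_add[OF i1 i2] by simp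
  finally show ?thesis using eq by simp
qed

lemma chi_cases: "chi_tilde G u = (if u \<in> G then -1 else 1)" by (simp add: chi_tilde_def)

lemma W_neg:
  assumes u: "u \<noteq> 0"
  shows "- (indicator D u * K u) \<le> K u * W u"
proof (cases "u \<in> G \<and> -u \<in> G")
  case True
  then have "u \<notin> ball c r" "-u \<notin> ball c r" using Gc by auto
  moreover have "dist (-c) u = norm (c + u)"
  proof -
    have "-c - u = -(c + u)" by simp
    then show ?thesis by (simp only: dist_norm norm_minus_cancel)
  qed
  moreover have "dist c (-u) = norm (c + u)" by (simp add: dist_norm)
  ultimately have "u \<in> D" unfolding D_def by auto
  then show ?thesis using True by (simp add: W_def chi_cases indicator_def)
next
  case False
  then have "0 \<le> W u" by (auto simp: W_def chi_cases)
  then have "0 \<le> K u * W u" using K_nonneg[OF u] by simp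
  moreover have "0 \<le> indicator D u * K u" using K_nonneg[OF u] by simp
  ultimately show ?thesis by linarith
qed

lemma lensB_nonneg: "0 \<le> lensB \<rho>"
proof -
  have "1 < (2::real) powr (1 - s)" using s by simp
  then have "0 < 1 - 1 / (2::real) powr (1 - s)" by (simp add: field_simps)
  then have "0 \<le> lens_const TYPE('a) s"
    unfolding lens_const_def using omega_pos[where 'a='a] by simp
  then show ?thesis unfolding lensB_def using r by simp
qed

lemma lens_int:
  assumes e: "0 < e" and \<rho>: "e < \<rho>"
  shows "(\<integral>u. indicator ((ball 0 \<rho> - ball 0 e) \<inter> D) u * K u \<partial>lebesgue) \<le> Lam * lensB \<rho>"
proof -
  let ?S = "(ball (0::'a) \<rho> - ball 0 e) \<inter> D"
  have S: "?S \<subseteq> -ball 0 e" "?S \<in> sets lebesgue" unfolding D_def by auto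
  have iK: "integrable lebesgue (\<lambda>u. indicator ?S u * K u)" by (rule int_K[OF e S])
  have iP: "integrable lebesgue (\<lambda>u. indicator ?S u * phi s u)"
    by (rule int_gen[OF e S phi_meas_real, of 1]) auto
  have "(\<integral>u. indicator ?S u * K u \<partial>lebesgue) \<le> (\<integral>u. Lam * (indicator ?S u * phi s u) \<partial>lebesgue)"
  proof (rule Bochner_Integration.integral_mono[OF iK])
    show "integrable lebesgue (\<lambda>u. Lam * (indicator ?S u * phi s u))" using iP by simp
    show "indicator ?S u * K u \<le> Lam * (indicator ?S u * phi s u)" for u
    proof (cases "u \<in> ?S")
      case True
      then have "u \<noteq> 0" using e by auto
      then show ?thesis using Kup[of u] True by simp
    qed simp
  qed
  also have "\<dots> = Lam * (\<integral>u. indicator ?S u * phi s u \<partial>lebesgue)" by simp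
  also have "\<dots> \<le> Lam * lensB \<rho>"
  proof (rule mult_left_mono)
    show "0 \<le> Lam" using lam by simp
    show "(\<integral>u. indicator ?S u * phi s u \<partial>lebesgue) \<le> lensB \<rho>"
    proof (rule phi_int_le[OF e S lensB_nonneg])
      have "(\<integral>\<^sup>+u. ennreal (phi s u) * indicator ?S u \<partial>lebesgue)
          \<le> (\<integral>\<^sup>+u. ennreal (phi s u) * indicator (-(ball c r \<union> ball (-c) r) \<inter> ball 0 \<rho>) u \<partial>lebesgue)"
        by (intro nn_integral_mono) (auto simp: indicator_def D_def)
      also have "\<dots> \<le> ennreal (lensB \<rho>)"
        unfolding lensB_def using e \<rho> by (intro lens_nn[OF s r c]) auto
      finally show "(\<integral>\<^sup>+u. ennreal (phi s u) * indicator ?S u \<partial>lebesgue) \<le> ennreal (lensB \<rho>)" .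
    qed
  qed
  finally show ?thesis .
qed

lemma ann_lower:
  assumes e: "0 < e" and \<rho>: "e < \<rho>"
  shows "- (Lam * lensB \<rho>) \<le> (\<integral>u. indicator (ball 0 \<rho> - ball 0 e) u * F u \<partial>lebesgue)"
proof -
  let ?A = "ball (0::'a) \<rho> - ball 0 e"
  have S: "?A \<inter> D \<subseteq> -ball 0 e" "?A \<inter> D \<in> sets lebesgue" unfolding D_def by auto
  have iK: "integrable lebesgue (\<lambda>u. indicator (?A \<inter> D) u * K u)" by (rule int_K[OF e S])
  have iW: "integrable lebesgue (\<lambda>u. indicator ?A u * (K u * W u))"
  proof (rule int_gen[OF e ann_sub[OF e]])
    show "?A \<in> sets lebesgue" by simp
    show "(\<lambda>u. K u * W u) \<in> borel_measurable lebesgue"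
      by (rule borel_measurable_times[OF Kmeas W_meas])
    show "0 \<le> Lam" using lam by simp
    show "\<bar>K u * W u\<bar> \<le> Lam * phi s u" if "u \<in> ?A" for u
    proof -
      have "\<bar>W u\<bar> \<le> 1" by (auto simp: W_def chi_cases)
      then have "\<bar>K u * W u\<bar> \<le> \<bar>K u\<bar>" by (simp add: abs_mult mult_left_le)
      moreover have "u \<noteq> 0" using that e by auto
      then have "\<bar>K u\<bar> \<le> Lam * phi s u" using K_abs[of u] by simp
      ultimately show ?thesis by linarith
    qed
  qed
  have "- (Lam * lensB \<rho>) \<le> - (\<integral>u. indicator (?A \<inter> D) u * K u \<partial>lebesgue)"
    using lens_int[OF e \<rho>] by simp
  also have "\<dots> = (\<integral>u. - (indicator (?A \<inter> D) u * K u) \<partial>lebesgue)" by simp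
  also have "\<dots> \<le> (\<integral>u. indicator ?A u * (K u * W u) \<partial>lebesgue)"
  proof (rule Bochner_Integration.integral_mono)
    show "integrable lebesgue (\<lambda>u. - (indicator (?A \<inter> D) u * K u))" using iK by simp
    show "integrable lebesgue (\<lambda>u. indicator ?A u * (K u * W u))" by (rule iW)
    show "- (indicator (?A \<inter> D) u * K u) \<le> indicator ?A u * (K u * W u)" for u
    proof (cases "u \<in> ?A")
      case True
      then have "u \<noteq> 0" using e by auto
      then show ?thesis using W_neg[of u] True by (simp add: indicator_def)
    qed simp
  qed
  also have "\<dots> = (\<integral>u. indicator ?A u * F u \<partial>lebesgue)" by (rule ann_reflect[OF e, symmetric])
  finally show ?thesis .
qed

end

lemma int_ind_const: "(\<integral>u. indicator A u * (C::real) \<partial>lebesgue) = C * measure lebesgue (A::'a::euclidean_space set)"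
proof -
  have "(\<integral>u. indicator A u * C \<partial>lebesgue) = (\<integral>u. C * indicator A u \<partial>lebesgue)"
    by (simp add: mult.commute)
  also have "\<dots> = C * (\<integral>u. indicator A u \<partial>lebesgue)" by (rule integral_mult_right_zero)
  also have "(\<integral>u. indicator A u \<partial>lebesgue) = measure lebesgue A"
    by simp
  finally show ?thesis by simp
qed

lemma ind_const_int:
  fixes C :: real
  assumes "A \<in> sets lebesgue" "emeasure lebesgue A < \<infinity>"
  shows "integrable lebesgue (\<lambda>u::'a::euclidean_space. indicator A u * C)"
proof -
  have "integrable lebesgue (\<lambda>u::'a. C * indicator A u)"
    by (rule Bochner_Integration.integrable_mult_right) (rule integrable_real_indicator[OF assms])
  then show ?thesis by (simp add: mult.commute)
qed

context ksetup begin

lemma outer_split: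
  assumes \<rho>: "0 < \<rho>"
  shows "(\<integral>u. indicator (-ball 0 \<rho>) u * F u \<partial>lebesgue)
       = (\<integral>u. indicator (-ball 0 \<rho>) u * K u \<partial>lebesgue) - 2 * (\<integral>u. indicator (-ball 0 \<rho> \<inter> G) u * K u \<partial>lebesgue)"
proof -
  have i1: "integrable lebesgue (\<lambda>u. indicator (-ball (0::'a) \<rho>) u * K u)"
    by (rule int_K[OF \<rho>]) auto
  have i2: "integrable lebesgue (\<lambda>u. indicator (-ball (0::'a) \<rho> \<inter> G) u * K u)"
    by (rule int_K[OF \<rho>]) (use Gs in auto)
  have "(\<integral>u. indicator (-ball 0 \<rho>) u * F u \<partial>lebesgue)
      = (\<integral>u. indicator (-ball 0 \<rho>) u * K u - 2 * (indicator (-ball 0 \<rho> \<inter> G) u * K u) \<partial>lebesgue)"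
    by (intro Bochner_Integration.integral_cong refl) (auto simp: F_def chi_cases indicator_def)
  also have "\<dots> = (\<integral>u. indicator (-ball 0 \<rho>) u * K u \<partial>lebesgue) - (\<integral>u. 2 * (indicator (-ball 0 \<rho> \<inter> G) u * K u) \<partial>lebesgue)"
    by (rule Bochner_Integration.integral_diff[OF i1]) (use i2 in simp)
  finally show ?thesis by simp
qed

lemma lowK:
  assumes \<rho>: "0 < \<rho>"
  shows "lam * 2 powr (-(real DIM('a) + s)) * omega TYPE('a) * \<rho> powr (-s)
     \<le> (\<integral>u. indicator (-ball (0::'a) \<rho>) u * K u \<partial>lebesgue)"
proof -
  let ?A = "ball (0::'a) (2*\<rho>) - ball 0 \<rho>"
  let ?p = "-(real DIM('a) + s)"
  let ?C = "lam * (2*\<rho>) powr ?p"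
  have Asets: "?A \<in> sets lebesgue" by simp
  have Afin: "emeasure lebesgue ?A < \<infinity>"
  proof -
    have "emeasure lebesgue ?A \<le> emeasure lebesgue (ball (0::'a) (2*\<rho>))" by (intro emeasure_mono) auto
    also have "\<dots> < \<infinity>" using emeasure_ball_omega[of "2*\<rho>" "0::'a"] \<rho> by simp
    finally show ?thesis .
  qed
  have mA: "measure lebesgue ?A = (2*\<rho>)^DIM('a) * omega TYPE('a) - \<rho>^DIM('a) * omega TYPE('a)"
  proof -
    have "measure lebesgue ?A = measure lebesgue (ball (0::'a) (2*\<rho>)) - measure lebesgue (ball (0::'a) \<rho>)"
      by (rule measure_Diff) (use emeasure_ball_omega[of "2*\<rho>" "0::'a"] \<rho> in auto)
    also have "\<dots> = (2*\<rho>)^DIM('a) * omega TYPE('a) - \<rho>^DIM('a) * omega TYPE('a)"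
    proof -
      have "measure lebesgue (ball (0::'a) (2*\<rho>)) = (2*\<rho>)^DIM('a) * omega TYPE('a)"
        by (rule measure_ball_omega) (use \<rho> in simp)
      moreover have "measure lebesgue (ball (0::'a) \<rho>) = \<rho>^DIM('a) * omega TYPE('a)"
        by (rule measure_ball_omega) (use \<rho> in simp)
      ultimately show ?thesis by (simp only:)
    qed
    finally show ?thesis .
  qed
  have iA: "integrable lebesgue (\<lambda>u. indicator ?A u * K u)" by (rule int_K[OF \<rho>]) auto
  have iO: "integrable lebesgue (\<lambda>u. indicator (-ball (0::'a) \<rho>) u * K u)" by (rule int_K[OF \<rho>]) auto
  have iC: "integrable lebesgue (\<lambda>u. indicator ?A u * ?C)" by (rule ind_const_int[OF Asets Afin])
  have "?C * measure lebesgue ?A = (\<integral>u. indicator ?A u * ?C \<partial>lebesgue)"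
    by (rule int_ind_const[symmetric])
  also have "\<dots> \<le> (\<integral>u. indicator ?A u * K u \<partial>lebesgue)"
  proof (rule Bochner_Integration.integral_mono[OF iC iA])
    fix u show "indicator ?A u * ?C \<le> indicator ?A u * K u"
    proof (cases "u \<in> ?A")
      case True
      then have u: "u \<noteq> 0" "\<rho> \<le> norm u" "norm u < 2*\<rho>" by auto
      have "(2*\<rho>) powr ?p \<le> phi s u" using u s by (intro powr_mono2') auto
      then have "?C \<le> lam * phi s u" using lam by (intro mult_left_mono) auto
      also have "\<dots> \<le> K u" by (rule Klow[OF u(1)])
      finally show ?thesis using True by simp
    qed simp
  qed
  also have "\<dots> \<le> (\<integral>u. indicator (-ball (0::'a) \<rho>) u * K u \<partial>lebesgue)"
  proof (rule Bochner_Integration.integral_mono[OF iA iO])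
    fix u show "indicator ?A u * K u \<le> indicator (-ball (0::'a) \<rho>) u * K u"
    proof (cases "u \<in> ?A")
      case True
      then have "u \<noteq> 0" by auto
      then show ?thesis using True K_nonneg[of u] by simp
    next
      case False
      have "u \<notin> ball 0 \<rho> \<Longrightarrow> u \<noteq> 0" using \<rho> by auto
      then show ?thesis using False K_nonneg[of u] by (auto simp: indicator_def)
    qed
  qed
  finally have main: "?C * measure lebesgue ?A \<le> (\<integral>u. indicator (-ball (0::'a) \<rho>) u * K u \<partial>lebesgue)" .
  have om: "0 < omega TYPE('a)" by (rule omega_pos)
  have "\<rho>^DIM('a) * omega TYPE('a) \<le> measure lebesgue ?A"
  proof -
    have "(2::real) \<le> 2^DIM('a)"
      using power_increasing[of 1 "DIM('a)" "2::real"] by (simp add: DIM_positive Suc_leI)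
    then have "2 * \<rho>^DIM('a) \<le> 2^DIM('a) * \<rho>^DIM('a)" using \<rho> by (intro mult_right_mono) auto
    then have "\<rho>^DIM('a) \<le> (2*\<rho>)^DIM('a) - \<rho>^DIM('a)" by (simp add: power_mult_distrib)
    then show ?thesis unfolding mA using om by (simp add: left_diff_distrib[symmetric])
  qed
  then have le: "?C * (\<rho>^DIM('a) * omega TYPE('a)) \<le> ?C * measure lebesgue ?A"
    using lam \<rho> by (intro mult_left_mono) auto
  have eq: "?C * (\<rho>^DIM('a) * omega TYPE('a)) = lam * 2 powr ?p * omega TYPE('a) * \<rho> powr (-s)"
  proof -
    have "(2*\<rho>) powr ?p * \<rho>^DIM('a) = 2 powr ?p * (\<rho> powr ?p * \<rho> powr (real DIM('a)))"
      using \<rho> by (simp add: powr_mult powr_realpow)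
    also have "\<rho> powr ?p * \<rho> powr (real DIM('a)) = \<rho> powr (-s)"
      by (simp add: powr_add[symmetric])
    finally have "(2*\<rho>) powr ?p * \<rho>^DIM('a) = 2 powr ?p * \<rho> powr (-s)" .
    then show ?thesis by (simp add: algebra_simps)
  qed
  show ?thesis using main le eq by linarith
qed

end

context ksetup begin

definition outB where "outB \<rho> = 2^DIM('a) * omega TYPE('a) * \<rho> powr (-s) / (1 - 2 powr (-s))"

lemma outB_nonneg: "0 \<le> outB \<rho>"
proof -
  have "2 powr (-s) < 1" using s by (simp add: powr_less_one)
  then show ?thesis unfolding outB_def using omega_pos[where 'a='a] by simp
qed

lemma Gpart:
  assumes \<rho>: "0 < \<rho>" "\<rho> \<le> r"
  shows "(\<integral>u. indicator (-ball (0::'a) \<rho> \<inter> G) u * K u \<partial>lebesgue)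
     \<le> Lam * (\<rho> powr (-(real DIM('a) + s)) * measure lebesgue (G \<inter> ball c (2*r)) + outB r)"
proof -
  let ?p = "-(real DIM('a) + s)"
  let ?S1 = "-ball (0::'a) \<rho> \<inter> G"
  let ?S2 = "G \<inter> ball c (2*r)"
  let ?S3 = "-ball c (2*r)"
  have S1: "?S1 \<subseteq> -ball 0 \<rho>" "?S1 \<in> sets lebesgue" using Gs by auto
  have S3a: "r \<le> norm u" if "2*r \<le> dist c u" for u :: 'a
  proof -
    have "dist c u \<le> norm c + norm u" by (simp add: dist_norm norm_triangle_ineq4)
    then show ?thesis using that c by linarith
  qed
  have S3sub: "?S3 \<subseteq> -ball 0 r"
  proof (rule subsetI)
    fix x assume "x \<in> ?S3"
    then have "2*r \<le> dist c x" by simp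
    then have "r \<le> norm x" by (rule S3a)
    then show "x \<in> -ball 0 r" by simp
  qed
  have S3: "?S3 \<subseteq> -ball 0 r" "?S3 \<in> sets lebesgue" using S3sub by auto
  have S2: "?S2 \<in> sets lebesgue" by (rule sets.Int[OF Gs]) simp
  have S2f: "emeasure lebesgue ?S2 < \<infinity>"
  proof -
    have "emeasure lebesgue ?S2 \<le> emeasure lebesgue (ball c (2*r))" by (intro emeasure_mono) auto
    also have "\<dots> < \<infinity>" using emeasure_ball_omega[of "2*r" c] r by simp
    finally show ?thesis .
  qed
  have iK1: "integrable lebesgue (\<lambda>u. indicator ?S1 u * K u)" by (rule int_K[OF \<rho>(1) S1])
  have iP1: "integrable lebesgue (\<lambda>u. indicator ?S1 u * phi s u)"
    by (rule int_gen[OF \<rho>(1) S1 phi_meas_real, of 1]) auto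
  have iP3: "integrable lebesgue (\<lambda>u. indicator ?S3 u * phi s u)"
    by (rule int_gen[OF r S3 phi_meas_real, of 1]) auto
  have iC2: "integrable lebesgue (\<lambda>u. indicator ?S2 u * \<rho> powr ?p)" by (rule ind_const_int[OF S2 S2f])
  have "(\<integral>u. indicator ?S1 u * K u \<partial>lebesgue) \<le> (\<integral>u. Lam * (indicator ?S1 u * phi s u) \<partial>lebesgue)"
  proof (rule Bochner_Integration.integral_mono[OF iK1])
    show "integrable lebesgue (\<lambda>u. Lam * (indicator ?S1 u * phi s u))" using iP1 by simp
    show "indicator ?S1 u * K u \<le> Lam * (indicator ?S1 u * phi s u)" for u
    proof (cases "u \<in> ?S1")
      case True
      then have "u \<noteq> 0" using \<rho> by auto
      then show ?thesis using Kup[of u] True by simp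
    qed simp
  qed
  also have "\<dots> = Lam * (\<integral>u. indicator ?S1 u * phi s u \<partial>lebesgue)" by simp
  also have "\<dots> \<le> Lam * (\<rho> powr ?p * measure lebesgue ?S2 + outB r)"
  proof (rule mult_left_mono)
    show "0 \<le> Lam" using lam by simp
    have "(\<integral>u. indicator ?S1 u * phi s u \<partial>lebesgue)
        \<le> (\<integral>u. indicator ?S2 u * \<rho> powr ?p + indicator ?S3 u * phi s u \<partial>lebesgue)"
    proof (rule Bochner_Integration.integral_mono[OF iP1])
      show "integrable lebesgue (\<lambda>u. indicator ?S2 u * \<rho> powr ?p + indicator ?S3 u * phi s u)"
        using iC2 iP3 by simp
      show "indicator ?S1 u * phi s u \<le> indicator ?S2 u * \<rho> powr ?p + indicator ?S3 u * phi s u" for u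
      proof (cases "u \<in> ?S1")
        case True
        then have u: "\<rho> \<le> norm u" "u \<in> G" by auto
        show ?thesis
        proof (cases "u \<in> ball c (2*r)")
          case True
          have "phi s u \<le> \<rho> powr ?p" using u \<rho> s by (intro powr_mono2') auto
          then show ?thesis using True u \<open>u \<in> ?S1\<close> by (simp add: indicator_def)
        next
          case False
          then show ?thesis using u \<open>u \<in> ?S1\<close> by (simp add: indicator_def)
        qed
      next
        case False
        have "indicator ?S1 u * phi s u = 0" using False by simp
        moreover have "0 \<le> indicator ?S2 u * \<rho> powr ?p" by simp
        moreover have "0 \<le> indicator ?S3 u * phi s u" by simp
        ultimately show ?thesis by linarith
      qed
    qed
    also have "\<dots> = (\<integral>u. indicator ?S2 u * \<rho> powr ?p \<partial>lebesgue) + (\<integral>u. indicator ?S3 u * phi s u \<partial>lebesgue)"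
      by (rule Bochner_Integration.integral_add[OF iC2 iP3])
    also have "(\<integral>u. indicator ?S2 u * \<rho> powr ?p \<partial>lebesgue) = \<rho> powr ?p * measure lebesgue ?S2"
      by (rule int_ind_const)
    also have "(\<integral>u. indicator ?S3 u * phi s u \<partial>lebesgue) \<le> outB r"
    proof (rule phi_int_le[OF r S3 outB_nonneg])
      have "(\<integral>\<^sup>+u. ennreal (phi s u) * indicator ?S3 u \<partial>lebesgue)
          \<le> (\<integral>\<^sup>+u. ennreal (phi s u) * indicator (-ball (0::'a) r) u \<partial>lebesgue)"
        using S3(1) by (intro nn_integral_mono) (auto simp: indicator_def)
      also have "\<dots> \<le> ennreal (outB r)" unfolding outB_def by (rule outer_nn[OF s(1) r])
      finally show "(\<integral>\<^sup>+u. ennreal (phi s u) * indicator ?S3 u \<partial>lebesgue) \<le> ennreal (outB r)" .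
    qed
    finally show "(\<integral>u. indicator ?S1 u * phi s u \<partial>lebesgue) \<le> \<rho> powr ?p * measure lebesgue ?S2 + outB r"
      by simp
  qed
  finally show ?thesis .
qed

lemma lower_u:
  assumes e: "0 < e" "e < \<rho>" and \<rho>: "\<rho> \<le> r"
  shows "lam * 2 powr (-(real DIM('a) + s)) * omega TYPE('a) * \<rho> powr (-s) - Lam * lensB \<rho>
      - 2 * (Lam * (\<rho> powr (-(real DIM('a) + s)) * measure lebesgue (G \<inter> ball c (2*r)) + outB r))
     \<le> h e"
proof -
  have \<rho>0: "0 < \<rho>" using e by simp
  note a = h_split[OF e] ann_lower[OF e] outer_split[OF \<rho>0] lowK[OF \<rho>0] Gpart[OF \<rho>0 \<rho>]
  show ?thesis using a by linarith
qed

end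

context ksetup begin

lemma int_ann:
  assumes e: "0 < e" and g: "g \<in> borel_measurable lebesgue"
    and gb: "\<And>u. u \<noteq> 0 \<Longrightarrow> \<bar>g u\<bar> \<le> Lam * phi s u"
  shows "integrable lebesgue (\<lambda>u. indicator (ball 0 \<rho> - ball (0::'a) e) u * g u)"
proof (rule int_gen[OF e ann_sub[OF e] _ g, where C=Lam])
  show "0 \<le> Lam" using lam by simp
  show "ball 0 \<rho> - ball (0::'a) e \<in> sets lebesgue" by simp
  show "\<bar>g u\<bar> \<le> Lam * phi s u" if "u \<in> ball 0 \<rho> - ball 0 e" for u
  proof -
    have "u \<noteq> 0" using that e by auto
    then show ?thesis by (rule gb)
  qed
qed

lemma Wabs: "\<bar>W u\<bar> \<le> 1" by (auto simp: W_def chi_cases)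

lemma Wp_meas: "(\<lambda>u. K u * max (W u) 0) \<in> borel_measurable lebesgue"
  by (intro borel_measurable_times Kmeas borel_measurable_max W_meas borel_measurable_const)

lemma Wm_meas: "(\<lambda>u. K u * max (- W u) 0) \<in> borel_measurable lebesgue"
  by (intro borel_measurable_times Kmeas borel_measurable_max borel_measurable_uminus W_meas borel_measurable_const)

lemma Wp_props: "u \<noteq> 0 \<Longrightarrow> 0 \<le> K u * max (W u) 0 \<and> \<bar>K u * max (W u) 0\<bar> \<le> Lam * phi s u"
proof -
  assume u: "u \<noteq> 0"
  have k: "0 \<le> K u" "K u \<le> Lam * phi s u" using K_nonneg[OF u] Kup[OF u] by auto
  have m: "0 \<le> max (W u) 0" "max (W u) 0 \<le> 1" using Wabs[of u] by auto
  have "K u * max (W u) 0 \<le> K u" using k m by (simp add: mult_left_le)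
  then show ?thesis using k m by simp
qed

lemma Wm_props: "u \<noteq> 0 \<Longrightarrow> 0 \<le> K u * max (- W u) 0 \<and> \<bar>K u * max (- W u) 0\<bar> \<le> Lam * phi s u
   \<and> K u * max (- W u) 0 \<le> indicator D u * K u"
proof -
  assume u: "u \<noteq> 0"
  have k: "0 \<le> K u" "K u \<le> Lam * phi s u" using K_nonneg[OF u] Kup[OF u] by auto
  have m: "0 \<le> max (- W u) 0" "max (- W u) 0 \<le> 1" using Wabs[of u] by auto
  have "K u * max (- W u) 0 \<le> K u" using k m by (simp add: mult_left_le)
  moreover have "K u * max (- W u) 0 \<le> indicator D u * K u"
  proof (cases "0 \<le> W u")
    case True
    then show ?thesis using k by simp
  next
    case False
    then have "K u * max (- W u) 0 = - (K u * W u)" by simp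
    then show ?thesis using W_neg[OF u] by linarith
  qed
  ultimately show ?thesis using k m by simp
qed

lemma ann_mono_int:
  assumes g: "g \<in> borel_measurable lebesgue"
    and gp: "\<And>u. u \<noteq> 0 \<Longrightarrow> 0 \<le> g u \<and> \<bar>g u\<bar> \<le> Lam * phi s u"
    and ab: "0 < a" "a \<le> b"
  shows "(\<integral>u. indicator (ball 0 r - ball (0::'a) b) u * g u \<partial>lebesgue)
       \<le> (\<integral>u. indicator (ball 0 r - ball (0::'a) a) u * g u \<partial>lebesgue)"
proof (rule Bochner_Integration.integral_mono)
  have b: "0 < b" using ab by simp
  show "integrable lebesgue (\<lambda>u. indicator (ball 0 r - ball (0::'a) b) u * g u)"
    by (rule int_ann[OF b g]) (blast dest: gp)
  show "integrable lebesgue (\<lambda>u. indicator (ball 0 r - ball (0::'a) a) u * g u)"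
    by (rule int_ann[OF ab(1) g]) (blast dest: gp)
  fix u
  show "indicator (ball 0 r - ball (0::'a) b) u * g u \<le> indicator (ball 0 r - ball (0::'a) a) u * g u"
  proof (cases "u \<in> ball 0 r - ball (0::'a) a")
    case True
    then have "u \<noteq> 0" using ab by auto
    then show ?thesis using gp[of u] True by (auto simp: indicator_def)
  next
    case False
    then have "u \<notin> ball 0 r - ball (0::'a) b" using ab by auto
    then show ?thesis using False by simp
  qed
qed

lemma h_lim: "\<exists>L. ((\<lambda>e. ereal (h e)) \<longlongrightarrow> L) (at_right 0)"
proof -
  define P where "P e = (\<integral>u. indicator (ball 0 r - ball (0::'a) e) u * (K u * max (W u) 0) \<partial>lebesgue)" for e
  define N where "N e = (\<integral>u. indicator (ball 0 r - ball (0::'a) e) u * (K u * max (- W u) 0) \<partial>lebesgue)" for e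
  define R where "R = (\<integral>u. indicator (-ball (0::'a) r) u * F u \<partial>lebesgue)"
  have dec: "h e = P e + (R - N e)" if e: "0 < e" "e < r" for e
  proof -
    let ?A = "ball 0 r - ball (0::'a) e"
    have iP: "integrable lebesgue (\<lambda>u. indicator ?A u * (K u * max (W u) 0))"
      by (rule int_ann[OF e(1) Wp_meas]) (blast dest: Wp_props)
    have iN: "integrable lebesgue (\<lambda>u. indicator ?A u * (K u * max (- W u) 0))"
      by (rule int_ann[OF e(1) Wm_meas]) (blast dest: Wm_props)
    have "(\<integral>u. indicator ?A u * F u \<partial>lebesgue) = (\<integral>u. indicator ?A u * (K u * W u) \<partial>lebesgue)"
      by (rule ann_reflect[OF e(1)])
    also have "\<dots> = (\<integral>u. indicator ?A u * (K u * max (W u) 0) - indicator ?A u * (K u * max (- W u) 0) \<partial>lebesgue)"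
      by (intro Bochner_Integration.integral_cong refl) (simp add: max_def algebra_simps)
    also have "\<dots> = P e - N e" unfolding P_def N_def by (rule Bochner_Integration.integral_diff[OF iP iN])
    finally show ?thesis using h_split[OF e] unfolding R_def by simp
  qed
  have Pmono: "P b \<le> P a" if "0 < a" "a \<le> b" "b < r" for a b
    unfolding P_def by (rule ann_mono_int[OF Wp_meas Wp_props that(1,2)])
  have Nmono: "N b \<le> N a" if "0 < a" "a \<le> b" "b < r" for a b
    unfolding N_def by (rule ann_mono_int[OF Wm_meas _ that(1,2)]) (blast dest: Wm_props)
  have Nbdd: "N e \<le> Lam * lensB r" if e: "0 < e" "e < r" for e
  proof -
    let ?A = "ball 0 r - ball (0::'a) e"
    have iN: "integrable lebesgue (\<lambda>u. indicator ?A u * (K u * max (- W u) 0))"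
      by (rule int_ann[OF e(1) Wm_meas]) (blast dest: Wm_props)
    have iD: "integrable lebesgue (\<lambda>u. indicator (?A \<inter> D) u * K u)"
      by (rule int_K[OF e(1)]) (auto simp: D_def)
    have "N e \<le> (\<integral>u. indicator (?A \<inter> D) u * K u \<partial>lebesgue)"
      unfolding N_def
    proof (rule Bochner_Integration.integral_mono[OF iN iD])
      fix u show "indicator ?A u * (K u * max (- W u) 0) \<le> indicator (?A \<inter> D) u * K u"
      proof (cases "u \<in> ?A")
        case True
        then have "u \<noteq> 0" using e by auto
        then show ?thesis using Wm_props[of u] True by (simp add: indicator_def)
      qed simp
    qed
    also have "\<dots> \<le> Lam * lensB r" by (rule lens_int[OF e])
    finally show ?thesis .
  qed
  have "\<exists>l. (N \<longlongrightarrow> l) (at_right 0)"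
    by (rule mono_lim_bdd[where B="Lam * lensB r", OF r]) (auto intro: Nmono Nbdd)
  then obtain l where Nl: "(N \<longlongrightarrow> l) (at_right 0)" by blast
  have Pl: "((\<lambda>e. ereal (P e)) \<longlongrightarrow> (SUP e\<in>{0<..<r}. ereal (P e))) (at_right 0)"
    by (rule mono_lim[OF r]) (rule Pmono)
  have RNl: "((\<lambda>e. ereal (R - N e)) \<longlongrightarrow> ereal (R - l)) (at_right 0)"
    by (intro tendsto_ereal tendsto_diff tendsto_const Nl)
  have sum: "((\<lambda>e. ereal (P e) + ereal (R - N e)) \<longlongrightarrow> (SUP e\<in>{0<..<r}. ereal (P e)) + ereal (R - l)) (at_right 0)"
    by (rule tendsto_add_ereal_general1[OF _ Pl RNl]) simp
  have ev: "\<forall>\<^sub>F e in at_right 0. ereal (P e) + ereal (R - N e) = ereal (h e)"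
    unfolding eventually_at_right_field using r by (intro exI[of _ r]) (auto simp: dec)
  show ?thesis using sum tendsto_cong[OF ev] by blast
qed

end

lemma final_arith:
  fixes a0 Lam LC Co M r s om :: real and n :: nat
  assumes a0: "0 < a0" and Lam: "0 < Lam" and LC: "0 \<le> LC" and Co: "0 \<le> Co" and M: "0 \<le> M"
    and r: "0 < r" and s: "0 < s" "s < 1" and om: "0 < om"
  defines "X \<equiv> 2 * (M + 1 + Lam * LC + 2 * Lam * Co)"
  defines "T \<equiv> min 1 ((a0 / X) powr (1 / s))"
  defines "\<beta> \<equiv> a0 * T ^ n / (2 ^ (n + 2) * Lam * om)"
  assumes mG: "0 \<le> mG" "mG \<le> \<beta> * ((2*r)^n * om)"
  shows "(M + 1) * r powr (-s) \<le> a0 * (T*r) powr (-s) - Lam * (LC * (T*r/2) powr (1 - s) / r)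
           - 2 * (Lam * ((T*r) powr (-(real n + s)) * mG + Co * r powr (-s)))"
proof -
  have X: "0 < X" unfolding X_def using Lam LC Co M by (simp add: add_pos_nonneg)
  have T0: "0 < T" "T \<le> 1" unfolding T_def using a0 X by auto
  define R where "R = r powr (-s)"
  have R: "0 < R" unfolding R_def using r by simp
  have e1: "(T*r) powr (-s) = T powr (-s) * R" unfolding R_def using T0 r by (simp add: powr_mult)
  have e2: "(T*r/2) powr (1 - s) / r \<le> R"
  proof -
    have "(T*r/2) powr (1 - s) \<le> r powr (1 - s)"
      using T0 r s by (intro powr_mono2) (auto simp: field_simps)
    moreover have "r powr (1 - s) / r = R"
      unfolding R_def using r by (simp add: powr_diff powr_minus divide_inverse)
    moreover have "(T*r/2) powr (1 - s) / r \<le> r powr (1 - s) / r"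
      using calculation(1) r by (intro divide_right_mono) auto
    ultimately show ?thesis by simp
  qed
  have e4: "X \<le> a0 * T powr (-s)"
  proof -
    have "T \<le> (a0 / X) powr (1 / s)" unfolding T_def by simp
    then have "((a0 / X) powr (1 / s)) powr (-s) \<le> T powr (-s)"
      using T0 s by (intro powr_mono2') auto
    moreover have "((a0 / X) powr (1 / s)) powr (-s) = X / a0"
      using s a0 X by (simp add: powr_powr powr_minus_divide)
    ultimately have "X / a0 \<le> T powr (-s)" by simp
    then show ?thesis using a0 by (simp add: field_simps)
  qed
  have e3: "2 * Lam * ((T*r) powr (-(real n + s)) * mG) \<le> a0 / 2 * T powr (-s) * R"
  proof -
    have p: "(T*r) powr (-(real n + s)) = T powr (-s) * T powr (- real n) * (r powr (-s) * r powr (- real n))"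
      using T0 r by (simp add: powr_mult powr_add[symmetric] algebra_simps)
    have tn: "T powr (- real n) * T ^ n = 1"
      using T0 by (simp add: powr_minus powr_realpow)
    have rn: "r powr (- real n) * r ^ n = 1"
      using r by (simp add: powr_minus powr_realpow)
    have "2 * Lam * ((T*r) powr (-(real n + s)) * mG) \<le> 2 * Lam * ((T*r) powr (-(real n + s)) * (\<beta> * ((2*r)^n * om)))"
      using mG Lam by (intro mult_left_mono) auto
    also have "\<dots> = 2 * Lam * (T powr (-s) * R) * 2^n * om * \<beta> * (T powr (- real n) * (r powr (- real n) * r ^ n))"
      unfolding p R_def by (simp add: power_mult_distrib algebra_simps)
    also have "\<dots> = 2 * Lam * (T powr (-s) * R) * 2^n * om * (\<beta> * T powr (- real n))"
      using rn by simp
    also have "\<beta> * T powr (- real n) = a0 / (2 ^ (n + 2) * Lam * om)"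
      unfolding \<beta>_def using tn by (simp add: field_simps)
    also have "2 * Lam * (T powr (-s) * R) * 2^n * om * (a0 / (2 ^ (n + 2) * Lam * om)) = a0 / 2 * T powr (-s) * R"
      using Lam om by (simp add: field_simps power_add)
    finally show ?thesis .
  qed
  define Z where "Z = a0 * T powr (-s) * R"
  define P where "P = (T*r) powr (-(real n + s)) * mG"
  define Q where "Q = Lam * (LC * (T*r/2) powr (1 - s) / r)"
  have A: "a0 * (T*r) powr (-s) = Z" unfolding Z_def e1 by simp
  have B: "Q \<le> Lam * LC * R"
  proof -
    have "Lam * (LC * ((T*r/2) powr (1 - s) / r)) \<le> Lam * (LC * R)"
      using e2 Lam LC by (intro mult_left_mono) auto
    then show ?thesis unfolding Q_def by simp
  qed
  have C: "2 * Lam * P \<le> Z / 2" using e3 unfolding P_def Z_def by simp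
  have Dd: "X * R \<le> Z" using mult_right_mono[OF e4, of R] R unfolding Z_def by simp
  have E: "(M + 1) * R = X * R / 2 - Lam * LC * R - 2 * Lam * Co * R"
    unfolding X_def by (simp add: algebra_simps)
  have F: "2 * (Lam * (P + Co * R)) = 2 * Lam * P + 2 * Lam * Co * R" by (simp add: algebra_simps)
  have "(M + 1) * R \<le> Z - Q - 2 * (Lam * (P + Co * R))"
    using A B C Dd E F by linarith
  then show ?thesis unfolding R_def[symmetric] Q_def P_def A .
qed

lemma lens_const_nonneg:
  assumes "0 < s" "s < 1"
  shows "0 \<le> lens_const TYPE('a::euclidean_space) s"
proof -
  have "1 < (2::real) powr (1 - s)" using assms by simp
  then have "0 < 1 - 1 / (2::real) powr (1 - s)" by (simp add: field_simps)
  then show ?thesis unfolding lens_const_def using omega_pos[where 'a='a] by simp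
qed

lemma chi_meas_gen: "E \<in> sets lebesgue \<Longrightarrow> chi_tilde E \<in> borel_measurable lebesgue"
proof -
  assume [measurable]: "E \<in> sets lebesgue"
  have "(\<lambda>u. if u \<in> E then -1 else (1::real)) \<in> borel_measurable lebesgue" by measurable
  then show ?thesis by (simp add: chi_tilde_def[abs_def])
qed

lemma H_trunc_eq:
  fixes K :: "'a::euclidean_space \<Rightarrow> real"
  assumes K: "K \<in> borel_measurable lebesgue" and E: "E \<in> sets lebesgue"
  shows "H_trunc K E x e = (\<integral>u. indicator (-ball 0 e) u * (chi_tilde {u. x - u \<in> E} u * K u) \<partial>lebesgue)"
proof -
  define f where "f y = indicator (-ball x e) y * (chi_tilde E y * K (x - y))" for y
  have fm: "f \<in> borel_measurable lebesgue"
    unfolding f_def[abs_def]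
    by (intro borel_measurable_times borel_measurable_indicator chi_meas_gen[OF E]
        measurable_reflect_shift[OF K]) simp
  have "H_trunc K E x e = (\<integral>y. f y \<partial>lebesgue)"
    unfolding H_trunc_def set_lebesgue_integral_def f_def by simp
  also have "\<dots> = (\<integral>u. f (x - u) \<partial>lebesgue)" by (rule integral_reflect_shift[OF fm])
  also have "\<dots> = (\<integral>u. indicator (-ball 0 e) u * (chi_tilde {u. x - u \<in> E} u * K u) \<partial>lebesgue)"
  proof (intro Bochner_Integration.integral_cong refl)
    fix u
    have "dist x (x - u) = norm u" by (simp add: dist_norm)
    then have "indicator (-ball x e) (x - u) = (indicator (-ball 0 e) u :: real)"
      by (simp add: indicator_def)
    moreover have "chi_tilde E (x - u) = chi_tilde {u. x - u \<in> E} u" by (simp add: chi_tilde_def)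
    ultimately show "f (x - u) = indicator (-ball 0 e) u * (chi_tilde {u. x - u \<in> E} u * K u)"
      unfolding f_def by simp
  qed
  finally show ?thesis .
qed

theorem lemma3p3:
  fixes s lam Lam M :: real
  assumes "0 < s" "s < 1" "0 < lam" "lam \<le> Lam" "0 \<le> M"
  shows "\<exists>\<beta>>0. \<forall>(K :: 'a::euclidean_space \<Rightarrow> real) E x0 r x.
     K \<in> borel_measurable lebesgue \<longrightarrow>
     (\<forall>y. y \<noteq> 0 \<longrightarrow> lam * norm y powr (- (real DIM('a) + s)) \<le> K y
                    \<and> K y \<le> Lam * norm y powr (- (real DIM('a) + s))
                    \<and> K y = K (- y)) \<longrightarrow>
     E \<in> sets borel \<longrightarrow>
     0 < r \<longrightarrow> ball x0 r \<subseteq> - E \<longrightarrow>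
     x \<in> frontier E \<inter> frontier (ball x0 r) \<longrightarrow>
     measure lebesgue (E \<inter> ball x0 (2 * r)) \<le> \<beta> * measure lebesgue (ball x0 (2 * r)) \<longrightarrow>
     H_KE K E x \<ge> ereal ((M + 1) * r powr (- s))"
proof -
  note s = assms(1,2) and lam = assms(3,4) and M = assms(5)
  define om where "om = omega TYPE('a)"
  define a0 where "a0 = lam * 2 powr (-(real DIM('a) + s)) * om"
  define LC where "LC = lens_const TYPE('a) s"
  define Co where "Co = 2^DIM('a) * om / (1 - 2 powr (-s))"
  define X where "X = 2 * (M + 1 + Lam * LC + 2 * Lam * Co)"
  define T where "T = min 1 ((a0 / X) powr (1 / s))"
  define \<beta> where "\<beta> = a0 * T ^ DIM('a) / (2 ^ (DIM('a) + 2) * Lam * om)"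
  have om: "0 < om" unfolding om_def by (rule omega_pos)
  have a0: "0 < a0" unfolding a0_def using lam om by simp
  have Lam: "0 < Lam" using lam by simp
  have LC: "0 \<le> LC" unfolding LC_def by (rule lens_const_nonneg[OF s])
  have Co: "0 \<le> Co"
  proof -
    have "2 powr (-s) < 1" using s by (simp add: powr_less_one)
    then show ?thesis unfolding Co_def using om by simp
  qed
  have X: "0 < X" unfolding X_def using Lam LC Co M by (simp add: add_pos_nonneg)
  have T: "0 < T" "T \<le> 1" unfolding T_def using a0 X by auto
  have \<beta>: "0 < \<beta>" unfolding \<beta>_def using a0 T Lam om by simp
  show ?thesis
  proof (intro exI[of _ \<beta>] conjI allI impI)
    show "0 < \<beta>" by (rule \<beta>)
    fix K :: "'a \<Rightarrow> real" and E :: "'a set" and x0 x :: 'a and r :: real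
    assume Km: "K \<in> borel_measurable lebesgue"
      and Kb: "\<forall>y. y \<noteq> 0 \<longrightarrow> lam * norm y powr (- (real DIM('a) + s)) \<le> K y
                    \<and> K y \<le> Lam * norm y powr (- (real DIM('a) + s))
                    \<and> K y = K (- y)"
      and Eb: "E \<in> sets borel" and r: "0 < r" and Bsub: "ball x0 r \<subseteq> - E"
      and fr: "x \<in> frontier E \<inter> frontier (ball x0 r)"
      and mE: "measure lebesgue (E \<inter> ball x0 (2 * r)) \<le> \<beta> * measure lebesgue (ball x0 (2 * r))"
    define G where "G = {u. x - u \<in> E}"
    define c where "c = x - x0"
    have El: "E \<in> sets lebesgue" using Eb by (simp add: sets_completionI_sets)
    have Gs: "G \<in> sets lebesgue" unfolding G_def by (rule sets_reflect_shift[OF El])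
    have dd: "dist x0 (x - u) = dist c u" for u
    proof -
      have "x0 - (x - u) = - (c - u)" unfolding c_def by (simp add: algebra_simps)
      then show ?thesis by (simp only: dist_norm norm_minus_cancel)
    qed
    have c: "norm c = r"
    proof -
      have "x \<in> frontier (ball x0 r)" using fr by simp
      then have "x \<in> sphere x0 r" unfolding frontier_ball[OF r] .
      then show ?thesis unfolding c_def by (simp add: dist_norm norm_minus_commute)
    qed
    have Gc: "G \<inter> ball c r = {}"
    proof (rule ccontr)
      assume "G \<inter> ball c r \<noteq> {}"
      then obtain u where u: "x - u \<in> E" "dist c u < r" unfolding G_def by auto
      then have "x - u \<in> ball x0 r" using dd[of u] by simp
      then show False using Bsub u(1) by auto
    qed
    interpret ks: ksetup K G c r s lam Lam
    proof unfold_locales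
      show "K \<in> borel_measurable lebesgue" by (rule Km)
      show "G \<in> sets lebesgue" by (rule Gs)
      show "0 < r" by (rule r)
      show "norm c = r" by (rule c)
      show "G \<inter> ball c r = {}" by (rule Gc)
      show "0 < s" "s < 1" by (rule s(1), rule s(2))
      show "0 < lam" "lam \<le> Lam" by (rule lam(1), rule lam(2))
      fix y :: 'a assume y: "y \<noteq> 0"
      show "lam * norm y powr (- (real DIM('a) + s)) \<le> K y" using Kb y by blast
      show "K y \<le> Lam * norm y powr (- (real DIM('a) + s))" using Kb y by blast
      show "K y = K (- y)" using Kb y by blast
    qed
    have Heq: "H_trunc K E x e = ks.h e" for e
    proof -
      have "ks.h e = (\<integral>u. indicator (-ball 0 e) u * (chi_tilde G u * K u) \<partial>lebesgue)"
        by (simp only: ks.h_def ks.F_def)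
      then show ?thesis unfolding H_trunc_eq[OF Km El] G_def by simp
    qed
    obtain L where hL: "((\<lambda>e. ereal (ks.h e)) \<longlongrightarrow> L) (at_right 0)" using ks.h_lim by blast
    have HL: "H_KE K E x = L"
      unfolding H_KE_def Heq by (rule tendsto_Lim[OF trivial_limit_at_right_real hL])
    have mG: "measure lebesgue (G \<inter> ball c (2*r)) = measure lebesgue (E \<inter> ball x0 (2 * r))"
    proof -
      have "G \<inter> ball c (2*r) = {u. x - u \<in> E \<inter> ball x0 (2 * r)}"
      proof (intro set_eqI)
        fix u
        have "dist x0 (x - u) = dist c u" by (rule dd)
        then show "u \<in> G \<inter> ball c (2*r) \<longleftrightarrow> u \<in> {u. x - u \<in> E \<inter> ball x0 (2 * r)}"
          unfolding G_def by simp
      qed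
      moreover have "E \<inter> ball x0 (2 * r) \<in> sets lebesgue" by (rule sets.Int[OF El]) simp
      ultimately show ?thesis using emeasure_reflect_shift[of "E \<inter> ball x0 (2 * r)" x]
        by (simp add: measure_def)
    qed
    have mB: "measure lebesgue (ball x0 (2 * r)) = (2*r)^DIM('a) * om"
      unfolding om_def by (rule measure_ball_omega) (use r in simp)
    have mG2: "measure lebesgue (G \<inter> ball c (2*r)) \<le> \<beta> * ((2*r)^DIM('a) * om)"
      using mE unfolding mG mB .
    have bound: "(M + 1) * r powr (-s) \<le> a0 * (T*r) powr (-s) - Lam * (LC * (T*r/2) powr (1 - s) / r)
           - 2 * (Lam * ((T*r) powr (-(real DIM('a) + s)) * measure lebesgue (G \<inter> ball c (2*r)) + Co * r powr (-s)))"
      unfolding \<beta>_def T_def X_def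
      by (rule final_arith[OF a0 Lam LC Co M r s om]) (use mG2 in \<open>auto simp: \<beta>_def T_def X_def\<close>)
    have ev: "\<forall>\<^sub>F e in at_right 0. ereal ((M + 1) * r powr (-s)) \<le> ereal (ks.h e)"
      unfolding eventually_at_right_field
    proof (intro exI[of _ "T*r"] conjI allI impI)
      show "0 < T * r" using T r by simp
      fix e :: real assume e: "0 < e" "e < T * r"
      have Tr: "T * r \<le> r" using T r by simp
      have "(M + 1) * r powr (-s) \<le> ks.h e"
        using bound ks.lower_u[OF e Tr]
        unfolding ks.lensB_def ks.outB_def a0_def LC_def Co_def om_def
        by (simp add: algebra_simps)
      then show "ereal ((M + 1) * r powr (-s)) \<le> ereal (ks.h e)" by simp
    qed
    show "ereal ((M + 1) * r powr (-s)) \<le> H_KE K E x"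
      unfolding HL by (rule tendsto_lowerbound[OF hL ev trivial_limit_at_right_real])
  qed
qed

end
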